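(* Let $d\in\{2,3\}$, let $K$ be a $C^{1,1}$ potential with $H\coloneqq\|D^2K\|_\infty<\infty$, let $B=(0,0,\omega)$ with $\omega>0$, and let $f_1,f_2$ be two solutions of the magnetized Vlasov equation (VB). Then for all $t\ge0$: if $d=2$, $$W_1(f_1(t),f_2(t))\le \min\Big(\Big(\sqrt{\tfrac{2(1-\cos(\omega t))}{\omega^2}}+1\Big)e^{4H\left(\frac{2(t-\sin(\omega t)/\omega)}{\omega^2}+t\right)},\ e^{(1+2H)t}\Big)\,W_1(f_1(0),f_2(0));$$ if $d=3$, $$W_1(f_1(t),f_2(t))\le \min\Big(\Big(\sqrt{\tfrac{2(1-\cos(\omega t))}{\omega^2}+t^2}+1\Big)e^{4H\left(\frac{2(t-\sin(\omega t)/\omega)}{\omega^2}+\frac{t^3}{3}+t\right)},\ e^{(1+2H)t}\Big)\,W_1(f_1(0),f_2(0)).$$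
   Context: The magnetized Vlasov equation (VB) on $\mathbb{T}^d\times\mathbb{R}^d$ is $\partial_tf+v\cdot\nabla_xf+(F[f]+v\wedge B)\cdot\nabla_vf=0$ with $F[f]=\nabla(K\ast\rho_f)$, $\rho_f=\int f\,dv$, and $f(0)$ a probability density; for $d=2$, $v\wedge B$ is computed with $v$ embedded in $\mathbb{R}^3$, giving $(\omega v_2,-\omega v_1)$. $W_1(\mu,\nu)=\inf_{\pi\in\Pi(\mu,\nu)}\int(|x-y|+|v-w|)\,d\pi(x,v,y,w)$, $\Pi(\mu,\nu)$ the set of couplings. *)

theory Defs
  imports "HOL-Analysis.Analysis" "HOL-Probability.Probability"
begin

text \<open>The torus T^d is R^d modulo the integer lattice Z^d, with fundamental
  domain [0,1)^d.  Phase space points are pairs (x,v).\<close>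

definition lattice :: "'a::euclidean_space set" where
  "lattice = {k. \<forall>b\<in>Basis. k \<bullet> b \<in> \<int>}"

definition fund_dom :: "'a::euclidean_space set" where
  "fund_dom = {x. \<forall>b\<in>Basis. 0 \<le> x \<bullet> b \<and> x \<bullet> b < 1}"

definition tor :: "'a::euclidean_space \<Rightarrow> 'a" where
  "tor x = (\<Sum>b\<in>Basis. frac (x \<bullet> b) *\<^sub>R b)"

definition tdist :: "'a::euclidean_space \<Rightarrow> 'a \<Rightarrow> real" where
  "tdist x y = (INF k\<in>lattice. norm (x - y - k))"

definition periodic :: "('a::euclidean_space \<Rightarrow> 'b) \<Rightarrow> bool" where
  "periodic K \<longleftrightarrow> (\<forall>x k. k \<in> lattice \<longrightarrow> K (x + k) = K x)"

definition cost :: "('a::euclidean_space \<times> 'a) \<Rightarrow> ('a \<times> 'a) \<Rightarrow> real" where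
  "cost z z' = tdist (fst z) (fst z') + norm (snd z - snd z')"

definition couplings ::
  "('a::euclidean_space \<times> 'a) measure \<Rightarrow> ('a \<times> 'a) measure \<Rightarrow> (('a \<times> 'a) \<times> ('a \<times> 'a)) measure set" where
  "couplings \<mu> \<nu> = {\<pi>. prob_space \<pi> \<and> sets \<pi> = sets borel \<and>
      distr \<pi> borel fst = \<mu> \<and> distr \<pi> borel snd = \<nu>}"

definition W1 :: "('a::euclidean_space \<times> 'a) measure \<Rightarrow> ('a \<times> 'a) measure \<Rightarrow> ennreal" where
  "W1 \<mu> \<nu> = (INF \<pi>\<in>couplings \<mu> \<nu>. \<integral>\<^sup>+ p. ennreal (cost (fst p) (snd p)) \<partial>\<pi>)"

text \<open>Mean field F[f](x) = \<nabla>(K * \<rho>_f)(x) = \<integral> \<nabla>K(x - y) d\<rho>_f(y), where G = \<nabla>K.\<close>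
definition force :: "('a::euclidean_space \<Rightarrow> 'a) \<Rightarrow> ('a \<times> 'a) measure \<Rightarrow> 'a \<Rightarrow> 'a" where
  "force G \<mu> x = (\<integral> z. G (x - fst z) \<partial>\<mu>)"

text \<open>Magnetic terms v \<wedge> B for B = (0,0,\<omega>).\<close>
definition mag2 :: "real \<Rightarrow> real \<times> real \<Rightarrow> real \<times> real" where
  "mag2 \<omega> v = (\<omega> * snd v, - \<omega> * fst v)"

definition mag3 :: "real \<Rightarrow> real \<times> real \<times> real \<Rightarrow> real \<times> real \<times> real" where
  "mag3 \<omega> v = (\<omega> * fst (snd v), - \<omega> * fst v, 0)"

text \<open>(Lagrangian / characteristic) measure solution of the magnetized Vlasov
  equation on T^d x R^d: \<mu> t is the law at time t, obtained by transporting
  the initial probability measure \<mu> 0 (on [0,1)^d x R^d) along characteristics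
  X' = V, V' = F[\<mu> t](X) + V \<wedge> B  (positions lifted to R^d, reduced mod 1).\<close>
definition vb_solution ::
  "('a::euclidean_space \<Rightarrow> 'a) \<Rightarrow> ('a \<Rightarrow> 'a) \<Rightarrow> (real \<Rightarrow> ('a \<times> 'a) measure) \<Rightarrow> bool" where
  "vb_solution G mag \<mu> \<longleftrightarrow>
     prob_space (\<mu> 0) \<and> sets (\<mu> 0) = sets borel \<and>
     emeasure (\<mu> 0) (fund_dom \<times> UNIV) = 1 \<and>
     (\<exists>Z :: real \<Rightarrow> 'a \<times> 'a \<Rightarrow> 'a \<times> 'a.
        (\<forall>z. Z 0 z = z) \<and>
        (\<forall>t\<ge>0. Z t \<in> borel_measurable borel) \<and>
        (\<forall>z. \<forall>t\<ge>0. ((\<lambda>s. Z s z) has_vector_derivative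
              (snd (Z t z), force G (\<mu> t) (fst (Z t z)) + mag (snd (Z t z))))
              (at t within {0..})) \<and>
        (\<forall>t\<ge>0. \<mu> t = distr (\<mu> 0) borel (\<lambda>z. (tor (fst (Z t z)), snd (Z t z)))))"

end

theory Submission imports Defs begin

lemma sqrt_inner_deriv:
  fixes \<phi> :: "real \<Rightarrow> 'v::real_inner"
  assumes d: "(\<phi> has_vector_derivative \<phi>') (at s)" and eta: "\<eta> > 0"
  shows "((\<lambda>s. sqrt (inner (\<phi> s) (\<phi> s) + \<eta>\<^sup>2)) has_real_derivative
           (inner (\<phi> s) \<phi>' / sqrt (inner (\<phi> s) (\<phi> s) + \<eta>\<^sup>2))) (at s)"
proof -
  have pos: "inner (\<phi> s) (\<phi> s) + \<eta>\<^sup>2 > 0" using eta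
    by (metis add_nonneg_pos inner_ge_zero zero_less_power)
  have d1: "((\<lambda>s. inner (\<phi> s) (\<phi> s) + \<eta>\<^sup>2) has_real_derivative (2 * inner (\<phi> s) \<phi>')) (at s)"
    using d unfolding has_vector_derivative_def has_field_derivative_def
    apply -
    apply (rule derivative_eq_intros | assumption)+
    by (auto simp: inner_commute algebra_simps)
  show ?thesis
    apply (rule DERIV_cong)
    apply (rule DERIV_chain2[OF DERIV_real_sqrt d1])
    using pos apply simp
    using pos by (simp add: field_simps)
qed

lemma sqrt_inner_bound:
  fixes a b :: "'v::real_inner"
  assumes "\<eta> > 0"
  shows "inner a b / sqrt (inner a a + \<eta>\<^sup>2) \<le> norm b"
proof -
  have "sqrt (inner a a + \<eta>\<^sup>2) \<ge> norm a"
    by (simp add: norm_eq_sqrt_inner)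
  moreover have pos: "sqrt (inner a a + \<eta>\<^sup>2) > 0" using assms
    by (metis add_nonneg_pos inner_ge_zero real_sqrt_gt_zero zero_less_power)
  moreover have "inner a b \<le> norm a * norm b" by (simp add: norm_cauchy_schwarz)
  ultimately have "inner a b \<le> sqrt (inner a a + \<eta>\<^sup>2) * norm b"
    by (meson mult_right_mono norm_ge_zero order_trans)
  then show ?thesis using pos by (simp add: divide_le_eq mult.commute)
qed

lemma ortho3:
  fixes a j p :: "'v::real_inner"
  assumes "inner a j = 0" "inner a p = 0" "inner j p = 0" "inner j j = inner a a"
  shows "(norm (xa *\<^sub>R a + xb *\<^sub>R j + xc *\<^sub>R p))\<^sup>2
          = (xa\<^sup>2 + xb\<^sup>2) * (norm a)\<^sup>2 + xc\<^sup>2 * (norm p)\<^sup>2"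
proof -
  have "inner (xa *\<^sub>R a + xb *\<^sub>R j + xc *\<^sub>R p) (xa *\<^sub>R a + xb *\<^sub>R j + xc *\<^sub>R p)
     = (xa\<^sup>2 + xb\<^sup>2) * inner a a + xc\<^sup>2 * inner p p"
    using assms by (simp add: inner_add_left inner_add_right power2_eq_square algebra_simps) (simp add: inner_commute)
  then show ?thesis by (simp add: power2_norm_eq_inner)
qed


lemma within_to_at:
  assumes "(f has_vector_derivative d) (at s within {0..})" "0 < (s::real)"
  shows "(f has_vector_derivative d) (at s)"
proof -
  have "at s within {0..} = at s" using assms(2) by (intro at_within_interior) simp
  then show ?thesis using assms(1) by simp
qed

lemma cont_from_deriv:
  assumes "\<And>s. 0 \<le> s \<Longrightarrow> (f has_vector_derivative d s) (at s within {0..})"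
  shows "continuous_on {0..t} f"
proof -
  have "continuous_on {0..} f"
    unfolding continuous_on_eq_continuous_within
    using assms has_vector_derivative_continuous by blast
  then show ?thesis by (rule continuous_on_subset) auto
qed

lemma first_cross:
  fixes c \<Psi> :: "real \<Rightarrow> real"
  assumes cc: "continuous_on {0..T} c" and c\<Psi>: "continuous_on {0..T} \<Psi>"
    and step: "\<And>t. 0 \<le> t \<Longrightarrow> t \<le> T \<Longrightarrow> (\<forall>s. 0 \<le> s \<and> s < t \<longrightarrow> c s \<le> \<Psi> s) \<Longrightarrow> c t < \<Psi> t"
    and t: "0 \<le> t" "t \<le> T"
  shows "c t \<le> \<Psi> t"
proof (rule ccontr)
  assume "\<not> c t \<le> \<Psi> t"
  define B where "B = {s \<in> {0..T}. \<Psi> s < c s}"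
  have tB: "t \<in> B" using t \<open>\<not> c t \<le> \<Psi> t\<close> by (auto simp: B_def)
  have bdd: "bdd_below B" unfolding B_def by (rule bdd_belowI[of _ 0]) auto
  define m where "m = Inf B"
  have m0: "0 \<le> m" unfolding m_def using tB by (intro cInf_greatest) (auto simp: B_def)
  have mT: "m \<le> T" unfolding m_def using cInf_lower[OF tB bdd] t by simp
  have below: "c s \<le> \<Psi> s" if "0 \<le> s" "s < m" for s
  proof (rule ccontr)
    assume "\<not> c s \<le> \<Psi> s"
    then have "s \<in> B" using that mT by (auto simp: B_def)
    then have "m \<le> s" unfolding m_def using bdd by (rule cInf_lower)
    then show False using that by simp
  qed
  have lt: "c m < \<Psi> m" using step[OF m0 mT] below by blast
  have "continuous_on {0..T} (\<lambda>s. \<Psi> s - c s)" by (intro continuous_intros cc c\<Psi>)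
  then obtain d where d: "d > 0" "\<And>s. s \<in> {0..T} \<Longrightarrow> dist s m < d \<Longrightarrow> dist (\<Psi> s - c s) (\<Psi> m - c m) < \<Psi> m - c m"
    unfolding continuous_on_iff using m0 mT lt by (metis atLeastAtMost_iff diff_gt_0_iff_gt)
  have "Inf B < m + d" using d(1) unfolding m_def by simp
  then obtain b where b: "b \<in> B" "b < m + d" using cInf_less_iff[OF _ bdd] tB by blast
  have "m \<le> b" unfolding m_def using b(1) bdd by (rule cInf_lower)
  then have "dist b m < d" using b(2) by (simp add: dist_real_def)
  then have "dist (\<Psi> b - c b) (\<Psi> m - c m) < \<Psi> m - c m" using d(2) b(1) by (auto simp: B_def)
  then have "\<Psi> b - c b > 0" by (simp add: dist_real_def abs_less_iff)
  then show False using b(1) by (simp add: B_def)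
qed


section \<open>Torus facts\<close>

lemma lattice_0: "0 \<in> lattice" unfolding lattice_def by simp

lemma lattice_add: "a \<in> lattice \<Longrightarrow> b \<in> lattice \<Longrightarrow> a + b \<in> lattice"
  unfolding lattice_def by (auto simp: inner_add_left)

lemma lattice_uminus: "a \<in> lattice \<Longrightarrow> - a \<in> lattice"
  unfolding lattice_def by (auto simp: Ints_minus)

lemma lattice_diff: "a \<in> lattice \<Longrightarrow> b \<in> lattice \<Longrightarrow> a - b \<in> lattice"
  unfolding lattice_def by (auto simp: inner_diff_left Ints_diff)

lemma tor_lattice: "x - tor x \<in> lattice"
proof -
  have "x - tor x = (\<Sum>b\<in>Basis. of_int \<lfloor>x \<bullet> b\<rfloor> *\<^sub>R b)"
  proof -
    have "x = (\<Sum>b\<in>Basis. (x \<bullet> b) *\<^sub>R b)" by (rule euclidean_representation[symmetric])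
    then have "x - tor x = (\<Sum>b\<in>Basis. (x \<bullet> b) *\<^sub>R b) - (\<Sum>b\<in>Basis. frac (x \<bullet> b) *\<^sub>R b)"
      unfolding tor_def by simp
    also have "\<dots> = (\<Sum>b\<in>Basis. (x \<bullet> b - frac (x \<bullet> b)) *\<^sub>R b)"
      by (simp add: sum_subtractf[symmetric] scaleR_diff_left)
    also have "\<dots> = (\<Sum>b\<in>Basis. of_int \<lfloor>x \<bullet> b\<rfloor> *\<^sub>R b)" by (simp add: frac_def)
    finally show ?thesis .
  qed
  moreover have "(\<Sum>b\<in>Basis. of_int \<lfloor>x \<bullet> b\<rfloor> *\<^sub>R b) \<bullet> c \<in> \<int>" if "c \<in> Basis" for c
    using that by (simp add: inner_sum_left inner_Basis if_distrib cong: if_cong)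
  ultimately show ?thesis unfolding lattice_def by simp
qed

lemma tor_norm: "norm (tor x) \<le> real DIM('a)" for x :: "'a::euclidean_space"
proof -
  have "norm (tor x) \<le> (\<Sum>b\<in>Basis. norm (frac (x \<bullet> b) *\<^sub>R b))"
    unfolding tor_def by (rule norm_sum)
  also have "\<dots> \<le> (\<Sum>b\<in>(Basis::'a set). 1)"
    by (intro sum_mono) (auto simp: frac_lt_1 less_imp_le)
  finally show ?thesis by simp
qed

lemma bdd_tdist: "bdd_below ((\<lambda>k. norm (x - y - k)) ` lattice)"
  by (rule bdd_belowI[of _ 0]) auto

lemma tdist_le: "k \<in> lattice \<Longrightarrow> tdist x y \<le> norm (x - y - k)"
  unfolding tdist_def by (rule cINF_lower[OF bdd_tdist])

lemma tdist_ge: "(\<And>k. k \<in> lattice \<Longrightarrow> c \<le> norm (x - y - k)) \<Longrightarrow> c \<le> tdist x y"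
  unfolding tdist_def using lattice_0 by (intro cINF_greatest) auto

lemma tdist_nonneg: "0 \<le> tdist x y"
  by (rule tdist_ge) simp

lemma tdist_shift:
  fixes x y k1 k2 :: "'a::euclidean_space"
  assumes "k1 \<in> lattice" "k2 \<in> lattice"
  shows "tdist (x - k1) (y - k2) = tdist x y"
proof (rule antisym)
  show "tdist (x - k1) (y - k2) \<le> tdist x y"
  proof (rule tdist_ge)
    fix k :: 'a assume k: "k \<in> lattice"
    have "tdist (x - k1) (y - k2) \<le> norm (x - k1 - (y - k2) - (k - k1 + k2))"
      using k assms by (intro tdist_le lattice_add lattice_diff)
    also have "\<dots> = norm (x - y - k)" by (simp add: algebra_simps)
    finally show "tdist (x - k1) (y - k2) \<le> norm (x - y - k)" .
  qed
  show "tdist x y \<le> tdist (x - k1) (y - k2)"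
  proof (rule tdist_ge)
    fix k :: 'a assume k: "k \<in> lattice"
    have "tdist x y \<le> norm (x - y - (k + k1 - k2))"
      using k assms by (intro tdist_le lattice_add lattice_diff)
    also have "\<dots> = norm (x - k1 - (y - k2) - k)" by (simp add: algebra_simps)
    finally show "tdist x y \<le> norm (x - k1 - (y - k2) - k)" .
  qed
qed

lemma tdist_tor: "tdist (tor x) (tor y) = tdist x y"
  using tdist_shift[OF tor_lattice[of x] tor_lattice[of y], of x y] by simp

lemma tdist_bound: "tdist x y \<le> real DIM('a)" for x y :: "'a::euclidean_space"
proof -
  have "tdist x y \<le> norm (x - y - (x - y - tor (x - y)))"
    by (intro tdist_le tor_lattice)
  also have "\<dots> = norm (tor (x - y))" by simp
  also have "\<dots> \<le> real DIM('a)" by (rule tor_norm)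
  finally show ?thesis .
qed

lemma tdist_lip: "tdist x y \<le> tdist x' y' + norm (x - x') + norm (y - y')"
  for x y x' y' :: "'a::euclidean_space"
proof -
  have "tdist x y - norm (x - x') - norm (y - y') \<le> tdist x' y'"
  proof (rule tdist_ge)
    fix k :: 'a assume k: "k \<in> lattice"
    have "tdist x y \<le> norm (x - y - k)" using k by (rule tdist_le)
    also have "\<dots> \<le> norm (x' - y' - k) + norm (x - x') + norm (y - y')"
      using norm_triangle_ineq4[of "x' - y' - k + (x - x')" "y - y'"] norm_triangle_ineq[of "x' - y' - k" "x - x'"]
      by (simp add: algebra_simps)
    finally show "tdist x y - norm (x - x') - norm (y - y') \<le> norm (x' - y' - k)" by simp
  qed
  then show ?thesis by simp
qed

lemma tdist_cont: "continuous_on UNIV (\<lambda>z::'a::euclidean_space \<times> 'a. tdist (fst z) (snd z))"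
proof -
  have "lipschitz_on 2 UNIV (\<lambda>z::'a \<times> 'a. tdist (fst z) (snd z))"
  proof (rule lipschitz_onI)
    fix z w :: "'a \<times> 'a"
    have a: "norm (fst z - fst w) \<le> dist z w" "norm (snd z - snd w) \<le> dist z w"
      by (metis dist_fst_le dist_norm, metis dist_snd_le dist_norm)
    have "tdist (fst z) (snd z) \<le> tdist (fst w) (snd w) + norm (fst z - fst w) + norm (snd z - snd w)"
      by (rule tdist_lip)
    moreover have "tdist (fst w) (snd w) \<le> tdist (fst z) (snd z) + norm (fst w - fst z) + norm (snd w - snd z)"
      by (rule tdist_lip)
    ultimately show "dist (tdist (fst z) (snd z)) (tdist (fst w) (snd w)) \<le> 2 * dist z w"
      using a by (simp add: dist_real_def abs_le_iff norm_minus_commute)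
  qed simp
  then show ?thesis by (rule lipschitz_on_continuous_on)
qed

lemma tdist_meas[measurable]: "(\<lambda>z::'a::euclidean_space \<times> 'a. tdist (fst z) (snd z)) \<in> borel_measurable borel"
  by (rule borel_measurable_continuous_onI[OF tdist_cont])

lemma tor_meas[measurable]: "(tor :: 'a::euclidean_space \<Rightarrow> 'a) \<in> borel_measurable borel"
proof -
  have "(\<lambda>x::'a. frac (x \<bullet> b) *\<^sub>R b) \<in> borel_measurable borel" for b
    unfolding frac_def by (intro borel_measurable_scaleR borel_measurable_diff borel_measurable_real_floor[THEN measurable_compose[rotated]] borel_measurable_inner) auto
  then show ?thesis unfolding tor_def by (intro borel_measurable_sum) auto
qed


section \<open>Potential facts\<close>

lemma bm_fst[measurable (raw)]: "f \<in> borel_measurable M \<Longrightarrow> (\<lambda>x. fst (f x)) \<in> borel_measurable M"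
  by (rule measurable_compose[OF _ borel_measurable_continuous_onI[OF continuous_on_fst[OF continuous_on_id]]])

lemma bm_snd[measurable (raw)]: "f \<in> borel_measurable M \<Longrightarrow> (\<lambda>x. snd (f x)) \<in> borel_measurable M"
  by (rule measurable_compose[OF _ borel_measurable_continuous_onI[OF continuous_on_snd[OF continuous_on_id]]])

lemma G_periodic:
  fixes K :: "'a::euclidean_space \<Rightarrow> real"
  assumes per: "periodic K" and gd: "\<forall>x. GDERIV K x :> G x" and k: "k \<in> lattice"
  shows "G (x + k) = G x"
proof -
  have d1: "(K has_derivative (\<lambda>h. inner h (G x))) (at x)" using gd unfolding gderiv_def by blast
  have d2: "(K has_derivative (\<lambda>h. inner h (G (x + k)))) (at (x + k))" using gd unfolding gderiv_def by blast
  have "((\<lambda>z. K (z + k)) has_derivative (\<lambda>h. inner h (G (x + k)))) (at x)"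
  proof -
    have sh: "((\<lambda>z. z + k) has_derivative (\<lambda>h. h)) (at x)" by (auto intro!: derivative_eq_intros)
    show ?thesis using has_derivative_compose[OF sh d2] by simp
  qed
  moreover have "(\<lambda>z. K (z + k)) = K" using per k unfolding periodic_def by auto
  ultimately have "(K has_derivative (\<lambda>h. inner h (G (x + k)))) (at x)" by simp
  from has_derivative_unique[OF this d1]
  have "\<And>h. inner h (G (x + k)) = inner h (G x)" by meson
  from this[of "G (x + k) - G x"]
  have "inner (G (x + k) - G x) (G (x + k) - G x) = 0" by (simp only: inner_diff_right)
  then show ?thesis by simp
qed

lemma H_nonneg:
  fixes G :: "'a::euclidean_space \<Rightarrow> 'a"
  assumes lip: "\<forall>x y. norm (G x - G y) \<le> H * norm (x - y)"
  shows "H \<ge> 0"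
proof -
  obtain b :: 'a where b: "b \<in> Basis" using nonempty_Basis by blast
  have "0 \<le> norm (G b - G 0)" by simp
  also have "\<dots> \<le> H * norm (b - 0)" using lip by blast
  finally show ?thesis using b by simp
qed

lemma G_lat:
  fixes K :: "'a::euclidean_space \<Rightarrow> real"
  assumes per: "periodic K" and gd: "\<forall>x. GDERIV K x :> G x"
    and lip: "\<forall>x y. norm (G x - G y) \<le> H * norm (x - y)" and j: "j \<in> lattice"
  shows "norm (G a - G b) \<le> H * norm (a - b - j)"
proof -
  have "G b = G (b + j)" using G_periodic[OF per gd j] by simp
  then show ?thesis using lip[rule_format, of a "b + j"] by (simp add: algebra_simps)
qed

lemma G_pair:
  fixes K :: "'a::euclidean_space \<Rightarrow> real"
  assumes per: "periodic K" and gd: "\<forall>x. GDERIV K x :> G x"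
    and lip: "\<forall>x y. norm (G x - G y) \<le> H * norm (x - y)" and k: "k \<in> lattice"
  shows "norm (G (x1 - a) - G (x2 - b)) \<le> H * norm (x1 - x2 - k) + H * tdist a b"
proof -
  have H0: "H \<ge> 0" by (rule H_nonneg[OF lip])
  have all: "norm (G (x1 - a) - G (x2 - b)) \<le> H * (norm (x1 - x2 - k) + norm (a - b - j))"
    if j: "j \<in> lattice" for j
  proof -
    have "norm (G (x1 - a) - G (x2 - b)) \<le> H * norm ((x1 - a) - (x2 - b) - (k - j))"
      using j k by (intro G_lat[OF per gd lip] lattice_diff)
    also have "(x1 - a) - (x2 - b) - (k - j) = (x1 - x2 - k) - (a - b - j)" by (simp add: algebra_simps)
    also have "H * norm \<dots> \<le> H * (norm (x1 - x2 - k) + norm (a - b - j))"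
      using H0 by (intro mult_left_mono norm_triangle_ineq4)
    finally show ?thesis .
  qed
  show ?thesis
  proof (cases "H = 0")
    case True
    then show ?thesis using all[OF lattice_0] by simp
  next
    case False
    then have Hp: "H > 0" using H0 by simp
    have "norm (G (x1 - a) - G (x2 - b)) / H - norm (x1 - x2 - k) \<le> tdist a b"
    proof (rule tdist_ge)
      fix j :: 'a assume "j \<in> lattice"
      from all[OF this] Hp show "norm (G (x1 - a) - G (x2 - b)) / H - norm (x1 - x2 - k) \<le> norm (a - b - j)"
        by (simp add: divide_le_eq algebra_simps)
    qed
    then show ?thesis using Hp by (simp add: divide_le_eq algebra_simps)
  qed
qed

lemma G_bound:
  fixes K :: "'a::euclidean_space \<Rightarrow> real"
  assumes per: "periodic K" and gd: "\<forall>x. GDERIV K x :> G x"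
    and lip: "\<forall>x y. norm (G x - G y) \<le> H * norm (x - y)"
  shows "norm (G x) \<le> norm (G 0) + H * real DIM('a)"
proof -
  have H0: "H \<ge> 0" by (rule H_nonneg[OF lip])
  have "G x = G (tor x + (x - tor x))" by simp
  also have "\<dots> = G (tor x)" by (rule G_periodic[OF per gd tor_lattice])
  finally have "norm (G x - G 0) \<le> H * norm (tor x - 0)" using lip by metis
  also have "\<dots> \<le> H * real DIM('a)" using H0 tor_norm[of x] by (simp add: mult_left_mono)
  finally show ?thesis using norm_triangle_ineq2[of "G x" "G 0"] by simp
qed

lemma G_meas:
  fixes G :: "'a::euclidean_space \<Rightarrow> 'a"
  assumes lip: "\<forall>x y. norm (G x - G y) \<le> H * norm (x - y)"
  shows "G \<in> borel_measurable borel"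
proof -
  have "lipschitz_on H UNIV G"
    using lip H_nonneg[OF lip] by (intro lipschitz_onI) (auto simp: dist_norm)
  then show ?thesis by (intro borel_measurable_continuous_onI lipschitz_on_continuous_on)
qed


lemma force_rep:
  fixes K :: "'a::euclidean_space \<Rightarrow> real" and G :: "'a \<Rightarrow> 'a"
    and \<mu> :: "real \<Rightarrow> ('a \<times> 'a) measure" and Z :: "real \<Rightarrow> 'a \<times> 'a \<Rightarrow> 'a \<times> 'a"
    and \<pi> :: "'q measure"
  assumes per: "periodic K" and gd: "\<forall>x. GDERIV K x :> G x"
    and lip: "\<forall>x y. norm (G x - G y) \<le> H * norm (x - y)"
    and s0: "sets (\<mu> 0) = sets borel"
    and Zm: "Z s \<in> borel_measurable borel"
    and \<mu>s: "\<mu> s = distr (\<mu> 0) borel (\<lambda>z. (tor (fst (Z s z)), snd (Z s z)))"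
    and prm: "pr \<in> measurable \<pi> borel"
    and mar: "distr \<pi> borel pr = \<mu> 0"
  shows "force G (\<mu> s) x = (\<integral>q. G (x - fst (Z s (pr q))) \<partial>\<pi>)"
proof -
  note Zm[measurable] G_meas[OF lip, measurable]
  have m2: "(\<lambda>w. G (x - fst w)) \<in> borel_measurable borel"
    by (rule measurable_compose[OF _ G_meas[OF lip]], rule borel_measurable_continuous_onI) (intro continuous_intros)
  have m1: "(\<lambda>z. (tor (fst (Z s z)), snd (Z s z))) \<in> measurable (\<mu> 0) borel"
    by (subst measurable_cong_sets[OF s0 refl]) measurable
  have "force G (\<mu> s) x = (\<integral>w. G (x - fst w) \<partial>distr (\<mu> 0) borel (\<lambda>z. (tor (fst (Z s z)), snd (Z s z))))"
    unfolding force_def \<mu>s ..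
  also have "\<dots> = (\<integral>z. G (x - tor (fst (Z s z))) \<partial>\<mu> 0)"
    by (subst integral_distr[OF m1 m2]) simp
  also have "\<dots> = (\<integral>z. G (x - fst (Z s z)) \<partial>\<mu> 0)"
  proof -
    have "G (x - tor w) = G (x - w)" for w
    proof -
      have "G (x - tor w) = G ((x - w) + (w - tor w))" by simp
      also have "\<dots> = G (x - w)" by (rule G_periodic[OF per gd tor_lattice])
      finally show ?thesis .
    qed
    then show ?thesis by simp
  qed
  also have "\<dots> = (\<integral>z. G (x - fst (Z s z)) \<partial>distr \<pi> borel pr)" unfolding mar ..
  also have "\<dots> = (\<integral>q. G (x - fst (Z s (pr q))) \<partial>\<pi>)"
  proof -
    have m3: "(\<lambda>z. G (x - fst (Z s z))) \<in> borel_measurable borel"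
      by (rule measurable_compose[OF _ G_meas[OF lip]]) measurable
    show ?thesis by (subst integral_distr[OF prm m3]) simp
  qed
  finally show ?thesis .
qed


section \<open>Gronwall-type bootstrap on the level of measures\<close>

lemma gronwall_measure:
  fixes \<pi> :: "'q measure" and c :: "real \<Rightarrow> 'q \<Rightarrow> real" and Dm \<rho> \<theta> :: "real \<Rightarrow> real"
  assumes P: "prob_space \<pi>"
    and cm: "\<And>t. t \<ge> 0 \<Longrightarrow> (\<lambda>q. c t q) \<in> borel_measurable \<pi>"
    and cnn: "\<And>t q. t \<ge> 0 \<Longrightarrow> c t q \<ge> 0"
    and Dle: "\<And>s. s \<ge> 0 \<Longrightarrow> ennreal (Dm s) \<le> (\<integral>\<^sup>+q. ennreal (c s q) \<partial>\<pi>)"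
    and Dmax: "\<And>s. s \<ge> 0 \<Longrightarrow> Dm s \<le> Dx" and Dx0: "Dx \<ge> 0"
    and \<rho>1: "\<And>t. t \<ge> 0 \<Longrightarrow> \<rho> t \<ge> 1"
    and \<theta>0: "\<And>t. t \<ge> 0 \<Longrightarrow> 0 < \<theta> t" and \<theta>1: "\<And>t. t \<ge> 0 \<Longrightarrow> \<theta> t \<le> 1"
    and \<theta>m: "\<And>s t. 0 \<le> s \<Longrightarrow> s \<le> t \<Longrightarrow> \<theta> t \<le> \<theta> s"
    and pw: "\<And>T K t q. 0 \<le> K \<Longrightarrow> (\<And>s. 0 \<le> s \<Longrightarrow> s \<le> T \<Longrightarrow> Dm s \<le> K * \<rho> s) \<Longrightarrow> 0 \<le> t \<Longrightarrow> t \<le> T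
        \<Longrightarrow> c t q \<le> \<rho> t * (\<theta> t * c 0 q + K * (1 - \<theta> t))"
    and t: "t \<ge> 0"
  shows "(\<integral>\<^sup>+q. ennreal (c t q) \<partial>\<pi>) \<le> ennreal (\<rho> t) * (\<integral>\<^sup>+q. ennreal (c 0 q) \<partial>\<pi>)"
proof -
  define m0 where "m0 = (\<integral>\<^sup>+q. ennreal (c 0 q) \<partial>\<pi>)"
  have \<rho>0: "\<rho> t > 0" using \<rho>1[OF t] by simp
  show ?thesis
  proof (cases "m0 = \<top>")
    case True
    then show ?thesis unfolding m0_def using \<rho>0 by (simp add: ennreal_mult_top)
  next
    case False
    define m0r where "m0r = enn2real m0"
    have m0e: "m0 = ennreal m0r" unfolding m0r_def using False by (simp add: ennreal_enn2real_if)
    have m0r0: "m0r \<ge> 0" unfolding m0r_def by simp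
    define mr where "mr s = enn2real (\<integral>\<^sup>+q. ennreal (c s q) \<partial>\<pi>)" for s
    have c0m[measurable]: "(\<lambda>q. c 0 q) \<in> borel_measurable \<pi>" using cm[of 0] by simp
    have integ: "(\<integral>\<^sup>+q. ennreal (c s q) \<partial>\<pi>) = ennreal (mr s) \<and> mr s \<le> A * m0r + B"
      if s: "s \<ge> 0" and A: "A \<ge> 0" and B: "B \<ge> 0" and le: "\<And>q. c s q \<le> A * c 0 q + B" for s A B
    proof -
      have "(\<integral>\<^sup>+q. ennreal (c s q) \<partial>\<pi>) \<le> (\<integral>\<^sup>+q. ennreal A * ennreal (c 0 q) + ennreal B \<partial>\<pi>)"
      proof (rule nn_integral_mono)
        fix q
        have "ennreal (c s q) \<le> ennreal (A * c 0 q + B)" using le[of q] by (rule ennreal_leI)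
        also have "\<dots> = ennreal A * ennreal (c 0 q) + ennreal B"
          using A B cnn[of 0 q] by (simp add: ennreal_plus ennreal_mult)
        finally show "ennreal (c s q) \<le> ennreal A * ennreal (c 0 q) + ennreal B" .
      qed
      also have "\<dots> = ennreal A * m0 + ennreal B"
        unfolding m0_def using prob_space.emeasure_space_1[OF P]
        by (subst nn_integral_add) (auto simp: nn_integral_cmult)
      also have "\<dots> = ennreal (A * m0r + B)"
        unfolding m0e using A B m0r0 by (simp add: ennreal_plus ennreal_mult)
      finally have I: "(\<integral>\<^sup>+q. ennreal (c s q) \<partial>\<pi>) \<le> ennreal (A * m0r + B)" .
      then have fin: "(\<integral>\<^sup>+q. ennreal (c s q) \<partial>\<pi>) \<noteq> \<top>" by (auto simp: top_unique)
      then have e: "(\<integral>\<^sup>+q. ennreal (c s q) \<partial>\<pi>) = ennreal (mr s)"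
        unfolding mr_def by (simp add: ennreal_enn2real_if)
      have "mr s \<le> A * m0r + B"
        using I unfolding e using A B m0r0 by (subst (asm) ennreal_le_iff) auto
      with e show ?thesis by blast
    qed
    have mr0: "mr s \<ge> 0" for s unfolding mr_def by simp
    have crude: "(\<integral>\<^sup>+q. ennreal (c s q) \<partial>\<pi>) = ennreal (mr s) \<and> mr s \<le> \<rho> s * \<theta> s * m0r + \<rho> s * Dx * (1 - \<theta> s)"
      if s: "s \<ge> 0" for s
    proof (rule integ[OF s])
      show "0 \<le> \<rho> s * \<theta> s" using \<rho>1[OF s] \<theta>0[OF s] by simp
      show "0 \<le> \<rho> s * Dx * (1 - \<theta> s)" using \<rho>1[OF s] \<theta>1[OF s] Dx0 by simp
      fix q
      have "c s q \<le> \<rho> s * (\<theta> s * c 0 q + Dx * (1 - \<theta> s))"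
      proof (rule pw[OF Dx0 _ s order_refl])
        fix s' assume "0 \<le> s'" "s' \<le> s"
        then show "Dm s' \<le> Dx * \<rho> s'" using Dmax[of s'] \<rho>1[of s'] Dx0
          by (smt (verit, best) mult_le_cancel_left1)
      qed
      then show "c s q \<le> \<rho> s * \<theta> s * c 0 q + \<rho> s * Dx * (1 - \<theta> s)" by (simp add: algebra_simps)
    qed
    have Dmr: "Dm s \<le> mr s" if s: "s \<ge> 0" for s
    proof -
      have "ennreal (Dm s) \<le> ennreal (mr s)" using Dle[OF s] crude[OF s] by simp
      then show ?thesis using mr0[of s] by (cases "Dm s \<le> 0") (auto simp: ennreal_le_iff)
    qed
    define T where "T = t"
    have T: "T \<ge> 0" using t by (simp add: T_def)
    define S where "S = (SUP s\<in>{0..T}. mr s / \<rho> s)"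
    have bdd: "bdd_above ((\<lambda>s. mr s / \<rho> s) ` {0..T})"
    proof (rule bdd_aboveI2)
      fix s assume "s \<in> {0..T}"
      then have s: "s \<ge> 0" by simp
      have "mr s \<le> \<rho> s * (\<theta> s * m0r + Dx * (1 - \<theta> s))" using crude[OF s] by (simp add: algebra_simps)
      also have "\<dots> \<le> \<rho> s * (m0r + Dx)"
        using \<theta>0[OF s] \<theta>1[OF s] \<rho>1[OF s] m0r0 Dx0
        by (intro mult_left_mono) (auto intro!: add_mono mult_left_le_one_le mult_left_le)
      finally show "mr s / \<rho> s \<le> m0r + Dx" using \<rho>1[OF s] by (simp add: divide_le_eq mult.commute)
    qed
    have Su: "mr s / \<rho> s \<le> S" if "s \<in> {0..T}" for s unfolding S_def using bdd that by (rule cSUP_upper2) simp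
    have S0: "S \<ge> 0" using Su[of 0] T mr0[of 0] \<rho>1[of 0] by (smt (verit) atLeastAtMost_iff divide_nonneg_nonneg)
    have "S \<le> m0r"
    proof (rule ccontr)
      assume "\<not> S \<le> m0r"
      then have Sm: "S > m0r" by simp
      have DK: "Dm s \<le> S * \<rho> s" if "0 \<le> s" "s \<le> T" for s
      proof -
        have "Dm s \<le> mr s" using Dmr that by simp
        also have "\<dots> = (mr s / \<rho> s) * \<rho> s" using \<rho>1[of s] that by simp
        also have "\<dots> \<le> S * \<rho> s" using Su[of s] that \<rho>1[of s] by (intro mult_right_mono) auto
        finally show ?thesis .
      qed
      define R where "R = S - \<theta> T * (S - m0r)"
      have "S \<le> R"
        unfolding S_def
      proof (rule cSUP_least)
        show "{0..T} \<noteq> {}" using T by simp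
        fix s assume "s \<in> {0..T}"
        then have s: "0 \<le> s" "s \<le> T" by auto
        have "mr s \<le> \<rho> s * \<theta> s * m0r + \<rho> s * S * (1 - \<theta> s)"
        proof -
          have "(\<integral>\<^sup>+q. ennreal (c s q) \<partial>\<pi>) = ennreal (mr s) \<and> mr s \<le> \<rho> s * \<theta> s * m0r + \<rho> s * S * (1 - \<theta> s)"
          proof (rule integ[OF s(1)])
            show "0 \<le> \<rho> s * \<theta> s" using \<rho>1[OF s(1)] \<theta>0[OF s(1)] by simp
            show "0 \<le> \<rho> s * S * (1 - \<theta> s)" using \<rho>1[OF s(1)] \<theta>1[OF s(1)] S0 by simp
            fix q
            have "c s q \<le> \<rho> s * (\<theta> s * c 0 q + S * (1 - \<theta> s))"
              by (rule pw[OF S0 DK s(1) s(2)])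
            then show "c s q \<le> \<rho> s * \<theta> s * c 0 q + \<rho> s * S * (1 - \<theta> s)" by (simp add: algebra_simps)
          qed
          then show ?thesis by blast
        qed
        then have X: "mr s \<le> \<rho> s * (\<theta> s * m0r + S * (1 - \<theta> s))" by (simp add: algebra_simps)
        then have "mr s / \<rho> s \<le> \<theta> s * m0r + S * (1 - \<theta> s)"
          using \<rho>1[OF s(1)] by (simp add: divide_le_eq mult.commute)
        also have "\<dots> = S - \<theta> s * (S - m0r)" by (simp add: algebra_simps)
        also have "\<dots> \<le> S - \<theta> T * (S - m0r)"
          using \<theta>m[OF s] Sm by (simp add: mult_right_mono)
        finally show "mr s / \<rho> s \<le> R" unfolding R_def .
      qed
      moreover have "\<theta> T * (S - m0r) > 0" using \<theta>0[OF T] Sm by simp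
      ultimately show False unfolding R_def by simp
    qed
    then have "mr T / \<rho> T \<le> m0r" using Su[of T] T by simp
    then have "mr T \<le> \<rho> T * m0r" using \<rho>1[OF T] by (simp add: divide_le_eq mult.commute)
    then have "ennreal (mr T) \<le> ennreal (\<rho> T) * ennreal m0r"
      using \<rho>1[OF T] m0r0 by (simp add: ennreal_mult[symmetric] ennreal_leI)
    then show ?thesis using crude[OF T] unfolding T_def m0_def[symmetric] m0e by simp
  qed
qed


lemma tdist_meas2[measurable (raw)]:
  fixes A B :: "'q \<Rightarrow> 'a::euclidean_space"
  assumes "A \<in> borel_measurable M" "B \<in> borel_measurable M"
  shows "(\<lambda>q. tdist (A q) (B q)) \<in> borel_measurable M"
  using measurable_compose[OF borel_measurable_Pair[OF assms] tdist_meas] by simp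

lemma force_diff:
  fixes K :: "'a::euclidean_space \<Rightarrow> real" and G :: "'a \<Rightarrow> 'a" and \<pi> :: "'q measure"
    and A B :: "'q \<Rightarrow> 'a"
  assumes per: "periodic K" and gd: "\<forall>x. GDERIV K x :> G x"
    and lip: "\<forall>x y. norm (G x - G y) \<le> H * norm (x - y)"
    and P: "prob_space \<pi>" and Am: "A \<in> borel_measurable \<pi>" and Bm: "B \<in> borel_measurable \<pi>"
    and k: "k \<in> lattice"
  shows "norm ((\<integral>q. G (x1 - A q) \<partial>\<pi>) - (\<integral>q. G (x2 - B q) \<partial>\<pi>))
     \<le> H * norm (x1 - x2 - k) + H * (\<integral>q. tdist (A q) (B q) \<partial>\<pi>)"
proof -
  interpret prob_space \<pi> by (rule P)
  have H0: "H \<ge> 0" by (rule H_nonneg[OF lip])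
  note Am[measurable] Bm[measurable] G_meas[OF lip, measurable]
  have mA: "(\<lambda>q. G (x1 - A q)) \<in> borel_measurable \<pi>" by (rule measurable_compose[OF _ G_meas[OF lip]]) measurable
  have mB: "(\<lambda>q. G (x2 - B q)) \<in> borel_measurable \<pi>" by (rule measurable_compose[OF _ G_meas[OF lip]]) measurable
  have iA: "integrable \<pi> (\<lambda>q. G (x1 - A q))"
    by (rule integrable_const_bound[where B = "norm (G 0) + H * real DIM('a)"]) (use G_bound[OF per gd lip] mA in auto)
  have iB: "integrable \<pi> (\<lambda>q. G (x2 - B q))"
    by (rule integrable_const_bound[where B = "norm (G 0) + H * real DIM('a)"]) (use G_bound[OF per gd lip] mB in auto)
  have iT: "integrable \<pi> (\<lambda>q. tdist (A q) (B q))"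
    by (rule integrable_const_bound[where B = "real DIM('a)"]) (auto simp: tdist_nonneg tdist_bound)
  have "(\<integral>q. G (x1 - A q) \<partial>\<pi>) - (\<integral>q. G (x2 - B q) \<partial>\<pi>) = (\<integral>q. G (x1 - A q) - G (x2 - B q) \<partial>\<pi>)"
    using iA iB by simp
  also have "norm \<dots> \<le> (\<integral>q. norm (G (x1 - A q) - G (x2 - B q)) \<partial>\<pi>)" by (rule integral_norm_bound)
  also have "\<dots> \<le> (\<integral>q. H * norm (x1 - x2 - k) + H * tdist (A q) (B q) \<partial>\<pi>)"
    using iA iB iT by (intro integral_mono G_pair[OF per gd lip k]) auto
  also have "\<dots> = H * norm (x1 - x2 - k) + H * (\<integral>q. tdist (A q) (B q) \<partial>\<pi>)"
    using iT prob_space by (simp add: lebesgue_integral_const)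
  finally show ?thesis .
qed

lemma tdist_inf:
  fixes x y :: "'a::euclidean_space"
  assumes a: "a > 0" and h: "\<And>k. k \<in> lattice \<Longrightarrow> C \<le> a * (norm (x - y - k) + v) + b"
  shows "C \<le> a * (tdist x y + v) + b"
proof -
  have "(C - b) / a - v \<le> tdist x y"
  proof (rule tdist_ge)
    fix k :: 'a assume "k \<in> lattice"
    from h[OF this] a show "(C - b) / a - v \<le> norm (x - y - k)" by (simp add: divide_le_eq algebra_simps)
  qed
  then show ?thesis using a by (simp add: divide_le_eq algebra_simps)
qed

lemma ennreal_INF_bound:
  assumes c: "c > 0" and h: "\<And>p. p \<in> S \<Longrightarrow> x \<le> ennreal c * f p"
  shows "x \<le> ennreal c * (INF p\<in>S. f p)"
proof -
  have inv: "ennreal (1 / c) * ennreal c = 1" using c by (simp add: ennreal_mult[symmetric])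
  have "x * ennreal (1 / c) \<le> (INF p\<in>S. f p)"
  proof (rule INF_greatest)
    fix p assume "p \<in> S"
    then have "x * ennreal (1 / c) \<le> ennreal c * f p * ennreal (1 / c)" using h by (intro mult_right_mono) auto
    also have "\<dots> = f p * (ennreal (1 / c) * ennreal c)" by (simp add: ac_simps)
    also have "\<dots> = f p" unfolding inv by simp
    finally show "x * ennreal (1 / c) \<le> f p" .
  qed
  then have "ennreal c * (x * ennreal (1 / c)) \<le> ennreal c * (INF p\<in>S. f p)"
    by (rule mult_left_mono) simp
  then have "x * ennreal (1 / c) * ennreal c \<le> ennreal c * (INF p\<in>S. f p)"
    by (simp add: ac_simps)
  then show ?thesis using inv by (simp add: mult.assoc)
qed

locale magJP =
  fixes \<omega> :: real and J P :: "'v::euclidean_space \<Rightarrow> 'v" and \<kappa> :: real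
  assumes \<omega>_pos: "\<omega> > 0"
    and J_lin: "bounded_linear J" and P_lin: "bounded_linear P"
    and JJ: "\<And>v. J (J v) = P v - v"
    and JP: "\<And>v. J (P v) = 0" and PJ: "\<And>v. P (J v) = 0" and PP: "\<And>v. P (P v) = P v"
    and Jskew: "\<And>v w. inner (J v) w = - inner v (J w)"
    and Psym: "\<And>v w. inner (P v) w = inner v (P w)"
    and kap: "(\<kappa> = 0 \<and> (\<forall>v. P v = 0)) \<or> \<kappa> = 1"
begin

interpretation J: bounded_linear J by (rule J_lin)
interpretation P: bounded_linear P by (rule P_lin)

definition Rm :: "real \<Rightarrow> 'v \<Rightarrow> 'v" where
  "Rm \<tau> v = cos (\<omega> * \<tau>) *\<^sub>R (v - P v) + sin (\<omega> * \<tau>) *\<^sub>R J v + P v"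

definition Am :: "real \<Rightarrow> 'v \<Rightarrow> 'v" where
  "Am \<tau> v = (sin (\<omega> * \<tau>) / \<omega>) *\<^sub>R (v - P v) + ((1 - cos (\<omega> * \<tau>)) / \<omega>) *\<^sub>R J v + \<tau> *\<^sub>R P v"

definition al :: "real \<Rightarrow> real" where
  "al \<tau> = sqrt (2 * (1 - cos (\<omega> * \<tau>)) / \<omega>\<^sup>2 + \<kappa> * \<tau>\<^sup>2)"

definition be :: "real \<Rightarrow> real" where
  "be \<tau> = 2 * (\<tau> - sin (\<omega> * \<tau>) / \<omega>) / \<omega>\<^sup>2 + \<kappa> * \<tau> ^ 3 / 3 + \<tau>"

lemma Jv_v: "inner (J v) v = 0"
  using Jskew[of v v] by (simp add: inner_commute)

lemma ip_ap: "inner (v - P v) (P v) = 0"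
  using Psym[of v "P v"] by (simp add: inner_diff_left inner_diff_right PP inner_commute)

lemma ip_jp: "inner (J v) (P v) = 0"
  using Psym[of "J v" v] by (simp add: PJ inner_commute)

lemma ip_aj: "inner (v - P v) (J v) = 0"
  using Jv_v[of v] ip_jp[of v] by (simp add: inner_diff_left inner_diff_right inner_commute)

lemma ip_vp: "inner v (P v) = inner (P v) (P v)"
  using ip_ap[of v] by (simp add: inner_diff_left)

lemma nj: "inner (J v) (J v) = inner (v - P v) (v - P v)"
proof -
  have "inner (J v) (J v) = - inner v (J (J v))" by (rule Jskew)
  also have "\<dots> = inner v v - inner v (P v)" by (simp add: JJ inner_diff_right)
  also have "\<dots> = inner (v - P v) (v - P v)"
    using ip_vp[of v] by (simp add: inner_diff_left inner_diff_right inner_commute[of "P v" v])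
  finally show ?thesis .
qed

lemma nv: "(norm v)\<^sup>2 = (norm (v - P v))\<^sup>2 + (norm (P v))\<^sup>2"
proof -
  have "inner (v - P v) (v - P v) = inner v v - inner v (P v)"
    using ip_vp[of v] by (simp add: inner_diff_left inner_diff_right inner_commute[of "P v" v])
  then show ?thesis using ip_vp[of v] by (simp add: power2_norm_eq_inner)
qed

lemma norm_R: "norm (Rm \<tau> v) = norm v"
proof -
  have e: "Rm \<tau> v = cos (\<omega> * \<tau>) *\<^sub>R (v - P v) + sin (\<omega> * \<tau>) *\<^sub>R J v + 1 *\<^sub>R P v"
    unfolding Rm_def by simp
  have "(norm (Rm \<tau> v))\<^sup>2 = ((cos (\<omega> * \<tau>))\<^sup>2 + (sin (\<omega> * \<tau>))\<^sup>2) * (norm (v - P v))\<^sup>2 + 1\<^sup>2 * (norm (P v))\<^sup>2"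
    unfolding e by (rule ortho3[OF ip_aj ip_ap ip_jp nj])
  also have "\<dots> = (norm v)\<^sup>2" using nv[of v] by simp
  finally show ?thesis by (simp add: power2_eq_iff_nonneg)
qed

lemma al_nonneg: "al \<tau> \<ge> 0"
  unfolding al_def using kap by (auto intro!: real_sqrt_ge_zero simp: cos_le_one)

lemma al_sq: "(al \<tau>)\<^sup>2 = 2 * (1 - cos (\<omega> * \<tau>)) / \<omega>\<^sup>2 + \<kappa> * \<tau>\<^sup>2"
proof -
  have "2 * (1 - cos (\<omega> * \<tau>)) / \<omega>\<^sup>2 + \<kappa> * \<tau>\<^sup>2 \<ge> 0"
    using kap by (auto simp: cos_le_one)
  then show ?thesis unfolding al_def by (rule real_sqrt_pow2)
qed

lemma sin_cos_id: "(sin x / \<omega>)\<^sup>2 + ((1 - cos x) / \<omega>)\<^sup>2 = 2 * (1 - cos x) / \<omega>\<^sup>2"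
proof -
  have "(sin x)\<^sup>2 + (1 - cos x)\<^sup>2 = 2 * (1 - cos x)"
    using sin_cos_squared_add[of x] by (simp add: power2_eq_square algebra_simps)
  then show ?thesis by (simp add: power_divide add_divide_distrib[symmetric])
qed

lemma norm_A: "norm (Am \<tau> v) \<le> al \<tau> * norm v"
proof -
  define c where "c = 2 * (1 - cos (\<omega> * \<tau>)) / \<omega>\<^sup>2"
  have c0: "c \<ge> 0" unfolding c_def by (simp add: cos_le_one)
  have "(norm (Am \<tau> v))\<^sup>2 = ((sin (\<omega> * \<tau>) / \<omega>)\<^sup>2 + ((1 - cos (\<omega> * \<tau>)) / \<omega>)\<^sup>2) * (norm (v - P v))\<^sup>2 + \<tau>\<^sup>2 * (norm (P v))\<^sup>2"
    unfolding Am_def by (rule ortho3[OF ip_aj ip_ap ip_jp nj])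
  also have "\<dots> = c * (norm (v - P v))\<^sup>2 + \<tau>\<^sup>2 * (norm (P v))\<^sup>2"
    unfolding c_def sin_cos_id ..
  also have "\<dots> \<le> (al \<tau>)\<^sup>2 * (norm v)\<^sup>2"
  proof (cases "\<kappa> = 1")
    case False
    then have P0: "\<And>w. P w = 0" using kap by auto
    have "(al \<tau>)\<^sup>2 = c" using False kap unfolding al_sq c_def by auto
    then show ?thesis by (simp add: P0)
  next
    case k1: True
    have a2: "(al \<tau>)\<^sup>2 = c + \<tau>\<^sup>2" using al_sq[of \<tau>] k1 unfolding c_def by simp
    have n: "(norm (v - P v))\<^sup>2 \<le> (norm v)\<^sup>2" "(norm (P v))\<^sup>2 \<le> (norm v)\<^sup>2"
      using nv[of v] by auto
    have "c * (norm (v - P v))\<^sup>2 \<le> c * (norm v)\<^sup>2"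
      using c0 n(1) by (rule mult_left_mono[rotated])
    moreover have "\<tau>\<^sup>2 * (norm (P v))\<^sup>2 \<le> \<tau>\<^sup>2 * (norm v)\<^sup>2"
      using n(2) by (rule mult_left_mono) simp
    ultimately show ?thesis unfolding a2 by (simp add: distrib_right)
  qed
  finally have "(norm (Am \<tau> v))\<^sup>2 \<le> (al \<tau> * norm v)\<^sup>2" by (simp add: power_mult_distrib)
  then show ?thesis by (rule power2_le_imp_le[OF _ mult_nonneg_nonneg[OF al_nonneg norm_ge_zero]])
qed

lemma R0: "Rm 0 v = v" unfolding Rm_def by simp
lemma A0: "Am 0 v = 0" unfolding Am_def by simp

lemma R_J: "Rm \<tau> (J v) = J (Rm \<tau> v)"
  unfolding Rm_def by (simp add: J.add J.diff J.scaleR JJ JP PJ algebra_simps)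

lemma R_add: "Rm \<tau> (v + w) = Rm \<tau> v + Rm \<tau> w"
  unfolding Rm_def by (simp add: J.add P.add algebra_simps)
lemma R_scale: "Rm \<tau> (c *\<^sub>R v) = c *\<^sub>R Rm \<tau> v"
  unfolding Rm_def by (simp add: J.scaleR P.scaleR algebra_simps)
lemma A_add: "Am \<tau> (v + w) = Am \<tau> v + Am \<tau> w"
  unfolding Am_def by (simp add: J.add P.add algebra_simps)

lemma A_J: "Am \<tau> (\<omega> *\<^sub>R J v) = Rm \<tau> v - v"
proof -
  have 1: "Am \<tau> (\<omega> *\<^sub>R J v) = sin (\<omega> * \<tau>) *\<^sub>R J v + (1 - cos (\<omega> * \<tau>)) *\<^sub>R (P v - v)"
    using \<omega>_pos unfolding Am_def by (simp add: J.scaleR P.scaleR JJ PJ)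
  have 2: "Rm \<tau> v - v = sin (\<omega> * \<tau>) *\<^sub>R J v + (1 - cos (\<omega> * \<tau>)) *\<^sub>R (P v - v)"
    unfolding Rm_def by (simp add: algebra_simps)
  show ?thesis using 1 2 by simp
qed

lemma R_deriv:
  assumes "(u has_vector_derivative u') (at s)"
  shows "((\<lambda>s. Rm (t - s) (u s)) has_vector_derivative (Rm (t - s) u' - \<omega> *\<^sub>R J (Rm (t - s) (u s)))) (at s)"
  unfolding Rm_def
  apply (rule has_vector_derivative_eq_rhs)
   apply (rule derivative_eq_intros J.has_vector_derivative P.has_vector_derivative assms refl)+
  by (simp add: J.add J.diff J.scaleR JJ JP algebra_simps)

lemma A_deriv:
  assumes "(u has_vector_derivative u') (at s)"
  shows "((\<lambda>s. Am (t - s) (u s)) has_vector_derivative (Am (t - s) u' - Rm (t - s) (u s))) (at s)"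
proof -
  have wne: "\<omega> \<noteq> 0" using \<omega>_pos by simp
  show ?thesis
  unfolding Am_def Rm_def
  apply (rule has_vector_derivative_eq_rhs)
   apply (rule derivative_eq_intros J.has_vector_derivative P.has_vector_derivative assms refl wne)+
  using wne apply (simp add: algebra_simps power2_eq_square)
  done
qed


lemma sig_eq: "2 * (1 - cos (\<omega> * \<tau>)) / \<omega>\<^sup>2 = (2 * \<bar>sin (\<omega> * \<tau> / 2)\<bar> / \<omega>)\<^sup>2"
proof -
  have "cos (\<omega> * \<tau>) = 1 - 2 * (sin (\<omega> * \<tau> / 2))\<^sup>2"
    using cos_double_sin[of "\<omega> * \<tau> / 2"] by simp
  then show ?thesis by (simp add: power_divide power_mult_distrib)
qed

lemma kap_nonneg: "\<kappa> \<ge> 0" using kap by auto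

lemma al_alt: "al \<tau> = norm (2 * \<bar>sin (\<omega> * \<tau> / 2)\<bar> / \<omega>, sqrt \<kappa> * \<tau>)"
  unfolding al_def norm_Pair sig_eq using kap_nonneg \<omega>_pos
  by (simp add: power_mult_distrib)

lemma abs_sin_diff: "\<bar>sin (a - b :: real)\<bar> \<le> \<bar>sin a\<bar> + \<bar>sin b\<bar>"
proof -
  have "\<bar>sin (a - b)\<bar> \<le> \<bar>sin a * cos b\<bar> + \<bar>cos a * sin b\<bar>"
    using abs_triangle_ineq4[of "sin a * cos b" "cos a * sin b"] by (simp add: sin_diff)
  also have "\<dots> \<le> \<bar>sin a\<bar> + \<bar>sin b\<bar>"
    by (intro add_mono) (auto simp: abs_mult intro: mult_le_one[THEN order_trans] 
        mult_right_le_one_le mult_left_le_one_le)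
  finally show ?thesis .
qed

lemma norm_pair_mono:
  fixes a b c d :: real
  assumes "\<bar>a\<bar> \<le> \<bar>c\<bar>" "\<bar>b\<bar> \<le> \<bar>d\<bar>"
  shows "norm (a, b) \<le> norm (c, d)"
  unfolding norm_Pair using assms
  by (intro real_sqrt_le_mono add_mono) (auto intro: power_mono simp: abs_le_square_iff)

lemma al_sub:
  assumes "0 \<le> s" "s \<le> t"
  shows "al (t - s) \<le> al t + al s"
proof -
  define \<sigma> where "\<sigma> \<tau> = 2 * \<bar>sin (\<omega> * \<tau> / 2)\<bar> / \<omega>" for \<tau>
  have "\<bar>sin (\<omega> * (t - s) / 2)\<bar> \<le> \<bar>sin (\<omega> * t / 2)\<bar> + \<bar>sin (\<omega> * s / 2)\<bar>"
    using abs_sin_diff[of "\<omega> * t / 2" "\<omega> * s / 2"] by (simp add: right_diff_distrib diff_divide_distrib)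
  then have s1: "\<sigma> (t - s) \<le> \<sigma> t + \<sigma> s"
    unfolding \<sigma>_def using \<omega>_pos by (simp add: divide_right_mono add_divide_distrib[symmetric])
  have s0: "\<sigma> \<tau> \<ge> 0" for \<tau> unfolding \<sigma>_def using \<omega>_pos by simp
  have "al (t - s) = norm (\<sigma> (t - s), sqrt \<kappa> * (t - s))" unfolding al_alt \<sigma>_def ..
  also have "\<dots> \<le> norm (\<sigma> t + \<sigma> s, sqrt \<kappa> * t + sqrt \<kappa> * s)"
    apply (rule norm_pair_mono)
    using s1 s0[of "t - s"] s0[of t] s0[of s] assms kap_nonneg mult_nonneg_nonneg[OF real_sqrt_ge_zero[OF kap_nonneg] assms(1)]
    by (auto simp: abs_mult algebra_simps abs_le_iff intro: mult_right_mono)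
  also have "\<dots> = norm ((\<sigma> t, sqrt \<kappa> * t) + (\<sigma> s, sqrt \<kappa> * s))" by simp
  also have "\<dots> \<le> norm (\<sigma> t, sqrt \<kappa> * t) + norm (\<sigma> s, sqrt \<kappa> * s)" by (rule norm_triangle_ineq)
  also have "\<dots> = al t + al s" unfolding al_alt \<sigma>_def ..
  finally show ?thesis .
qed

lemma kernel:
  assumes "0 \<le> s" "s \<le> t"
  shows "(1 + al (t - s)) * (1 + al s) \<le> (1 + al t) * (2 * (1 + (al s)\<^sup>2))"
proof -
  have a: "al t \<ge> 0" "al s \<ge> 0" "al (t - s) \<ge> 0" using al_nonneg by auto
  have "(1 + al (t - s)) * (1 + al s) \<le> (1 + al t + al s) * (1 + al s)"
    using al_sub[OF assms] a by (intro mult_right_mono) auto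
  also have "\<dots> = (1 + al t) * (1 + al s) + (al s + (al s)\<^sup>2)" by (simp add: algebra_simps power2_eq_square)
  also have "\<dots> \<le> (1 + al t) * (1 + al s) + (1 + al t) * (al s + (al s)\<^sup>2)"
    using a by (intro add_left_mono) (simp add: algebra_simps)
  also have "\<dots> = (1 + al t) * (1 + 2 * al s + (al s)\<^sup>2)" by (simp add: algebra_simps)
  also have "\<dots> \<le> (1 + al t) * (2 * (1 + (al s)\<^sup>2))"
  proof -
    have "2 * al s \<le> 1 + (al s)\<^sup>2" using sum_squares_bound[of "al s" 1] by (simp add: algebra_simps power2_eq_square)
    then show ?thesis using a by (intro mult_left_mono) auto
  qed
  finally show ?thesis .
qed

lemma be_deriv: "(be has_real_derivative (1 + (al \<tau>)\<^sup>2)) (at \<tau>)"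
proof -
  have wne: "\<omega> \<noteq> 0" using \<omega>_pos by simp
  show ?thesis
    unfolding be_def al_sq
    apply (rule DERIV_cong)
     apply (rule derivative_eq_intros refl wne | simp)+
    using wne by (simp add: field_simps power2_eq_square eval_nat_numeral)
qed

lemma be_mono: "s \<le> t \<Longrightarrow> be s \<le> be t"
  by (rule DERIV_nonneg_imp_nondecreasing[of s t be]) (auto intro!: exI be_deriv add_nonneg_nonneg)

lemma be0: "be 0 = 0" unfolding be_def by simp

lemma be_nonneg: "t \<ge> 0 \<Longrightarrow> be t \<ge> 0" using be_mono[of 0 t] be0 by simp

lemma cont_al: "continuous_on S al"
proof -
  have "\<forall>x\<in>S. \<omega>\<^sup>2 \<noteq> 0" using \<omega>_pos by auto
  then show ?thesis unfolding al_def by (intro continuous_intros)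
qed

lemma cont_be: "continuous_on S be"
proof -
  have "\<forall>x\<in>S. \<omega>\<^sup>2 \<noteq> 0" "\<forall>x\<in>S. \<omega> \<noteq> 0" "\<forall>x\<in>S. (3::real) \<noteq> 0" using \<omega>_pos by auto
  then show ?thesis unfolding be_def by (intro continuous_intros)
qed


lemma N_ge: "norm x \<le> sqrt (inner x x + \<eta>\<^sup>2)"
  by (simp add: norm_eq_sqrt_inner)

lemma N_le: "\<eta> > 0 \<Longrightarrow> sqrt (inner x x + \<eta>\<^sup>2) \<le> norm x + \<eta>"
proof -
  assume "\<eta> > 0"
  have "inner x x + \<eta>\<^sup>2 \<le> (norm x + \<eta>)\<^sup>2"
    using \<open>\<eta> > 0\<close> by (simp add: power2_sum power2_norm_eq_inner[symmetric])
  then have "sqrt (inner x x + \<eta>\<^sup>2) \<le> sqrt ((norm x + \<eta>)\<^sup>2)" by (rule real_sqrt_le_mono)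
  then show ?thesis using \<open>\<eta> > 0\<close> by simp
qed

lemma KS_a:
  fixes y u f :: "real \<Rightarrow> 'v" and h \<Gamma> :: "real \<Rightarrow> real"
  assumes t0: "0 < t"
    and yd: "\<And>s. 0 < s \<Longrightarrow> s < t \<Longrightarrow> (y has_vector_derivative u s) (at s)"
    and ud: "\<And>s. 0 < s \<Longrightarrow> s < t \<Longrightarrow> (u has_vector_derivative (f s + \<omega> *\<^sub>R J (u s))) (at s)"
    and yc: "continuous_on {0..t} y" and uc: "continuous_on {0..t} u"
    and fb: "\<And>s. 0 < s \<Longrightarrow> s < t \<Longrightarrow> norm (f s) \<le> (1 + al s) * h s"
    and h0: "\<And>s. 0 < s \<Longrightarrow> s < t \<Longrightarrow> 0 \<le> h s"
    and \<Gamma>d: "\<And>s. 0 < s \<Longrightarrow> s < t \<Longrightarrow> (\<Gamma> has_real_derivative (2 * (1 + (al s)\<^sup>2) * h s)) (at s)"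
    and \<Gamma>c: "continuous_on {0..t} \<Gamma>"
  shows "norm (y t) + norm (u t) \<le> (1 + al t) * (norm (y 0) + norm (u 0) + \<Gamma> t - \<Gamma> 0)"
proof (rule field_le_epsilon)
  fix e :: real assume e: "0 < e"
  define \<eta> where "\<eta> = e / 4"
  have \<eta>: "\<eta> > 0" using e by (simp add: \<eta>_def)
  define \<phi> where "\<phi> s = y s + Am (t - s) (u s)" for s
  define \<psi> where "\<psi> s = Rm (t - s) (u s)" for s
  define N where "N x = sqrt (inner x x + \<eta>\<^sup>2)" for x :: 'v
  define k where "k s = N (\<phi> s) + N (\<psi> s) - (1 + al t) * \<Gamma> s" for s
  have alt: "al t \<ge> 0" by (rule al_nonneg)
  have "k t \<le> k 0"
  proof (rule DERIV_nonpos_imp_decreasing_open[of 0 t k])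
    show "0 \<le> t" using t0 by simp
  next
    fix x assume x: "0 < x" "x < t"
    have \<phi>d: "(\<phi> has_vector_derivative Am (t - x) (f x)) (at x)"
      unfolding \<phi>_def
      apply (rule has_vector_derivative_eq_rhs)
       apply (rule has_vector_derivative_add[OF yd[OF x] A_deriv[OF ud[OF x]]])
      by (simp add: A_add A_J)
    have \<psi>d: "(\<psi> has_vector_derivative Rm (t - x) (f x)) (at x)"
      unfolding \<psi>_def
      apply (rule has_vector_derivative_eq_rhs)
       apply (rule R_deriv[OF ud[OF x]])
      by (simp add: R_add R_scale R_J)
    define d where "d = inner (\<phi> x) (Am (t - x) (f x)) / N (\<phi> x)
        + inner (\<psi> x) (Rm (t - x) (f x)) / N (\<psi> x) - (1 + al t) * (2 * (1 + (al x)\<^sup>2) * h x)"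
    have "DERIV k x :> d"
      unfolding k_def d_def N_def
      by (intro DERIV_diff DERIV_add DERIV_cmult sqrt_inner_deriv \<phi>d \<psi>d \<eta> \<Gamma>d x)
    moreover have "d \<le> 0"
    proof -
      have "inner (\<phi> x) (Am (t - x) (f x)) / N (\<phi> x) \<le> norm (Am (t - x) (f x))"
        unfolding N_def by (rule sqrt_inner_bound[OF \<eta>])
      also have "\<dots> \<le> al (t - x) * norm (f x)" by (rule norm_A)
      finally have 1: "inner (\<phi> x) (Am (t - x) (f x)) / N (\<phi> x) \<le> al (t - x) * norm (f x)" .
      have "inner (\<psi> x) (Rm (t - x) (f x)) / N (\<psi> x) \<le> norm (Rm (t - x) (f x))"
        unfolding N_def by (rule sqrt_inner_bound[OF \<eta>])
      then have 2: "inner (\<psi> x) (Rm (t - x) (f x)) / N (\<psi> x) \<le> norm (f x)" by (simp add: norm_R)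
      have "al (t - x) * norm (f x) + norm (f x) = (1 + al (t - x)) * norm (f x)" by (simp add: algebra_simps)
      also have "\<dots> \<le> (1 + al (t - x)) * ((1 + al x) * h x)"
        using fb[OF x] al_nonneg[of "t - x"] by (intro mult_left_mono) auto
      also have "\<dots> = ((1 + al (t - x)) * (1 + al x)) * h x" by (simp add: algebra_simps)
      also have "\<dots> \<le> ((1 + al t) * (2 * (1 + (al x)\<^sup>2))) * h x"
        using kernel[of x t] x h0[OF x] by (intro mult_right_mono) auto
      finally show ?thesis using 1 2 unfolding d_def by (simp add: algebra_simps)
    qed
    ultimately show "\<exists>y. DERIV k x :> y \<and> y \<le> 0" by blast
  next
    have wn: "\<forall>x\<in>{0..t}. \<omega> \<noteq> 0" using \<omega>_pos by auto
    have c\<phi>: "continuous_on {0..t} \<phi>"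
      unfolding \<phi>_def Am_def
      by (intro wn continuous_intros yc uc J.continuous_on P.continuous_on)
    have c\<psi>: "continuous_on {0..t} \<psi>"
      unfolding \<psi>_def Rm_def
      by (intro continuous_intros uc J.continuous_on P.continuous_on)
    show "continuous_on {0..t} k"
      unfolding k_def N_def
      by (intro continuous_intros c\<phi> c\<psi> \<Gamma>c)
  qed
  moreover have "norm (y t) + norm (u t) - (1 + al t) * \<Gamma> t \<le> k t"
    unfolding k_def \<phi>_def \<psi>_def N_def using N_ge[of "y t" \<eta>] N_ge[of "u t" \<eta>]
    by (simp add: A0 R0)
  moreover have "k 0 \<le> norm (y 0) + al t * norm (u 0) + norm (u 0) + 2 * \<eta> - (1 + al t) * \<Gamma> 0"
  proof -
    have "N (\<phi> 0) \<le> norm (\<phi> 0) + \<eta>" unfolding N_def by (rule N_le[OF \<eta>])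
    also have "norm (\<phi> 0) \<le> norm (y 0) + al t * norm (u 0)"
      unfolding \<phi>_def using norm_A[of t "u 0"] norm_triangle_ineq[of "y 0" "Am t (u 0)"] by simp
    finally have 1: "N (\<phi> 0) \<le> norm (y 0) + al t * norm (u 0) + \<eta>" by simp
    have "N (\<psi> 0) \<le> norm (\<psi> 0) + \<eta>" unfolding N_def by (rule N_le[OF \<eta>])
    then have 2: "N (\<psi> 0) \<le> norm (u 0) + \<eta>" unfolding \<psi>_def by (simp add: norm_R)
    show ?thesis unfolding k_def using 1 2 by simp
  qed
  ultimately have "norm (y t) + norm (u t) \<le> norm (y 0) + al t * norm (u 0) + norm (u 0) + 2 * \<eta> + (1 + al t) * (\<Gamma> t - \<Gamma> 0)"
    by (simp add: algebra_simps)
  also have "\<dots> \<le> (1 + al t) * (norm (y 0) + norm (u 0) + \<Gamma> t - \<Gamma> 0) + e"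
  proof -
    have "norm (y 0) \<le> (1 + al t) * norm (y 0)" using alt by (simp add: algebra_simps)
    then show ?thesis using e unfolding \<eta>_def by (simp add: algebra_simps)
  qed
  finally show "norm (y t) + norm (u t) \<le> (1 + al t) * (norm (y 0) + norm (u 0) + \<Gamma> t - \<Gamma> 0) + e" .
qed

lemma KS_b:
  fixes y u f :: "real \<Rightarrow> 'v" and \<Gamma> \<Gamma>' :: "real \<Rightarrow> real"
  assumes t0: "0 < t"
    and yd: "\<And>s. 0 < s \<Longrightarrow> s < t \<Longrightarrow> (y has_vector_derivative u s) (at s)"
    and ud: "\<And>s. 0 < s \<Longrightarrow> s < t \<Longrightarrow> (u has_vector_derivative (f s + \<omega> *\<^sub>R J (u s))) (at s)"
    and yc: "continuous_on {0..t} y" and uc: "continuous_on {0..t} u"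
    and fb: "\<And>s. 0 < s \<Longrightarrow> s < t \<Longrightarrow> norm (f s) + norm (u s) \<le> \<Gamma>' s"
    and \<Gamma>d: "\<And>s. 0 < s \<Longrightarrow> s < t \<Longrightarrow> (\<Gamma> has_real_derivative \<Gamma>' s) (at s)"
    and \<Gamma>c: "continuous_on {0..t} \<Gamma>"
  shows "norm (y t) + norm (u t) \<le> norm (y 0) + norm (u 0) + \<Gamma> t - \<Gamma> 0"
proof (rule field_le_epsilon)
  fix e :: real assume e: "0 < e"
  define \<eta> where "\<eta> = e / 4"
  have \<eta>: "\<eta> > 0" using e by (simp add: \<eta>_def)
  define N where "N x = sqrt (inner x x + \<eta>\<^sup>2)" for x :: 'v
  define k where "k s = N (y s) + N (u s) - \<Gamma> s" for s
  have "k t \<le> k 0"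
  proof (rule DERIV_nonpos_imp_decreasing_open[of 0 t k])
    show "0 \<le> t" using t0 by simp
  next
    fix x assume x: "0 < x" "x < t"
    define d where "d = inner (y x) (u x) / N (y x)
        + inner (u x) (f x + \<omega> *\<^sub>R J (u x)) / N (u x) - \<Gamma>' x"
    have "DERIV k x :> d"
      unfolding k_def d_def N_def
      by (intro DERIV_diff DERIV_add sqrt_inner_deriv yd ud \<eta> \<Gamma>d x)
    moreover have "d \<le> 0"
    proof -
      have 1: "inner (y x) (u x) / N (y x) \<le> norm (u x)"
        unfolding N_def by (rule sqrt_inner_bound[OF \<eta>])
      have "inner (u x) (\<omega> *\<^sub>R J (u x)) = 0"
        using Jv_v[of "u x"] by (simp add: inner_commute)
      then have "inner (u x) (f x + \<omega> *\<^sub>R J (u x)) = inner (u x) (f x)"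
        by (simp add: inner_add_right)
      moreover have "inner (u x) (f x) / N (u x) \<le> norm (f x)"
        unfolding N_def by (rule sqrt_inner_bound[OF \<eta>])
      ultimately have 2: "inner (u x) (f x + \<omega> *\<^sub>R J (u x)) / N (u x) \<le> norm (f x)" by simp
      show ?thesis using 1 2 fb[OF x] unfolding d_def by simp
    qed
    ultimately show "\<exists>y. DERIV k x :> y \<and> y \<le> 0" by blast
  next
    show "continuous_on {0..t} k"
      unfolding k_def N_def
      by (intro continuous_intros yc uc \<Gamma>c)
  qed
  moreover have "norm (y t) + norm (u t) - \<Gamma> t \<le> k t"
    unfolding k_def N_def using N_ge[of "y t" \<eta>] N_ge[of "u t" \<eta>] by simp
  moreover have "k 0 \<le> norm (y 0) + norm (u 0) + 2 * \<eta> - \<Gamma> 0"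
    unfolding k_def N_def using N_le[OF \<eta>, of "y 0"] N_le[OF \<eta>, of "u 0"] by simp
  ultimately show "norm (y t) + norm (u t) \<le> norm (y 0) + norm (u 0) + \<Gamma> t - \<Gamma> 0 + e"
    using e unfolding \<eta>_def by simp
qed


definition rho_a :: "real \<Rightarrow> real \<Rightarrow> real" where
  "rho_a H t = (1 + al t) * exp (4 * H * be t)"
definition th_a :: "real \<Rightarrow> real \<Rightarrow> real" where
  "th_a H t = exp (- (2 * H * be t))"

lemma al0: "al 0 = 0" unfolding al_def by simp

lemma pair_a:
  fixes X1 X2 V1 V2 F1 F2 :: "real \<Rightarrow> 'v" and D :: "real \<Rightarrow> real" and k :: 'v
  assumes H0: "H \<ge> 0" and K0: "K \<ge> 0"
    and dX1: "\<And>s. 0 \<le> s \<Longrightarrow> (X1 has_vector_derivative V1 s) (at s within {0..})"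
    and dV1: "\<And>s. 0 \<le> s \<Longrightarrow> (V1 has_vector_derivative (F1 s + \<omega> *\<^sub>R J (V1 s))) (at s within {0..})"
    and dX2: "\<And>s. 0 \<le> s \<Longrightarrow> (X2 has_vector_derivative V2 s) (at s within {0..})"
    and dV2: "\<And>s. 0 \<le> s \<Longrightarrow> (V2 has_vector_derivative (F2 s + \<omega> *\<^sub>R J (V2 s))) (at s within {0..})"
    and fb: "\<And>s. 0 \<le> s \<Longrightarrow> norm (F1 s - F2 s) \<le> H * norm (X1 s - X2 s - k) + H * D s"
    and DK: "\<And>s. 0 \<le> s \<Longrightarrow> s \<le> T \<Longrightarrow> D s \<le> K * rho_a H s"
    and t: "0 \<le> t" "t \<le> T"
  shows "norm (X1 t - X2 t - k) + norm (V1 t - V2 t)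
     \<le> rho_a H t * (th_a H t * (norm (X1 0 - X2 0 - k) + norm (V1 0 - V2 0)) + K * (1 - th_a H t))"
proof -
  define y where "y s = X1 s - X2 s - k" for s
  define u where "u s = V1 s - V2 s" for s
  define f where "f s = F1 s - F2 s" for s
  define c where "c s = norm (y s) + norm (u s)" for s
  define c0 where "c0 = c 0"
  define E where "E s = exp (4 * H * be s)" for s
  define Q where "Q s = exp (2 * H * be s)" for s
  have yd: "(y has_vector_derivative u s) (at s within {0..})" if "0 \<le> s" for s
    unfolding y_def u_def
    apply (rule has_vector_derivative_eq_rhs)
     apply (rule derivative_eq_intros dX1[OF that] dX2[OF that] refl)+
    by simp
  have ud: "(u has_vector_derivative (f s + \<omega> *\<^sub>R J (u s))) (at s within {0..})" if "0 \<le> s" for s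
    unfolding u_def f_def
    apply (rule has_vector_derivative_eq_rhs)
     apply (rule has_vector_derivative_diff[OF dV1[OF that] dV2[OF that]])
    by (simp add: J.diff scaleR_diff_right algebra_simps)
  have yc: "continuous_on {0..T'} y" for T' using yd by (rule cont_from_deriv)
  have uc: "continuous_on {0..T'} u" for T' using ud by (rule cont_from_deriv)
  have Q0: "Q s > 0" for s unfolding Q_def by simp
  have QE: "Q s \<le> E s" if "0 \<le> s" for s
    unfolding Q_def E_def using be_nonneg[OF that] H0 by (simp add: mult_right_mono)
  have c00: "c0 \<ge> 0" unfolding c0_def c_def by simp
  have main: "c t \<le> (1 + al t) * ((c0 + \<epsilon>) * Q t + K * (E t - Q t))" if \<epsilon>: "\<epsilon> > 0" for \<epsilon>
  proof -
    define \<Phi> where "\<Phi> s = (c0 + \<epsilon>) * Q s + K * (E s - Q s)" for s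
    define h where "h s = H * (\<Phi> s + K * E s)" for s
    have \<Phi>0: "\<Phi> 0 = c0 + \<epsilon>" unfolding \<Phi>_def Q_def E_def by (simp add: be0)
    have \<Phi>nn: "\<Phi> s \<ge> 0" if "0 \<le> s" for s
      unfolding \<Phi>_def using QE[OF that] Q0[of s] c00 \<epsilon> K0
      by (intro add_nonneg_nonneg mult_nonneg_nonneg) auto
    have \<Phi>d: "(\<Phi> has_real_derivative (2 * (1 + (al s)\<^sup>2) * h s)) (at s)" for s
      unfolding \<Phi>_def h_def Q_def E_def
      apply (rule DERIV_cong)
       apply (rule derivative_eq_intros be_deriv refl)+
      by (simp add: algebra_simps)
    have \<Phi>c: "continuous_on S \<Phi>" for S
      unfolding \<Phi>_def Q_def E_def by (intro continuous_intros cont_be)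
    have "c t \<le> (1 + al t) * \<Phi> t"
    proof (rule first_cross[of T c "\<lambda>s. (1 + al s) * \<Phi> s"])
      show "continuous_on {0..T} c" unfolding c_def by (intro continuous_intros yc uc)
      show "continuous_on {0..T} (\<lambda>s. (1 + al s) * \<Phi> s)" by (intro continuous_intros cont_al \<Phi>c)
      show "0 \<le> t" "t \<le> T" using t by auto
    next
      fix t' assume t': "0 \<le> t'" "t' \<le> T" and hyp: "\<forall>s. 0 \<le> s \<and> s < t' \<longrightarrow> c s \<le> (1 + al s) * \<Phi> s"
      show "c t' < (1 + al t') * \<Phi> t'"
      proof (cases "t' = 0")
        case True
        then show ?thesis using \<Phi>0 \<epsilon> by (simp add: al0 c0_def)
      next
        case False
        then have t'0: "0 < t'" using t' by simp
        have "norm (y t') + norm (u t') \<le> (1 + al t') * (norm (y 0) + norm (u 0) + \<Phi> t' - \<Phi> 0)"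
        proof (rule KS_a[OF t'0, where f = f and h = h])
          fix s assume s: "0 < s" "s < t'"
          show "(y has_vector_derivative u s) (at s)" using yd[of s] s by (intro within_to_at) auto
          show "(u has_vector_derivative f s + \<omega> *\<^sub>R J (u s)) (at s)" using ud[of s] s by (intro within_to_at) auto
          show "0 \<le> h s" unfolding h_def using H0 \<Phi>nn[of s] s K0 E_def by auto
          show "(\<Phi> has_real_derivative 2 * (1 + (al s)\<^sup>2) * h s) (at s)" by (rule \<Phi>d)
          have "norm (f s) \<le> H * norm (y s) + H * D s" unfolding f_def y_def using fb[of s] s by simp
          also have "\<dots> \<le> H * ((1 + al s) * \<Phi> s) + H * (K * rho_a H s)"
          proof (intro add_mono mult_left_mono H0)
            have "norm (y s) + norm (u s) \<le> (1 + al s) * \<Phi> s" using hyp s unfolding c_def by auto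
            then show "norm (y s) \<le> (1 + al s) * \<Phi> s" by (smt (verit) norm_ge_zero)
            show "D s \<le> K * rho_a H s" using DK[of s] s t' by auto
          qed
          also have "\<dots> = (1 + al s) * h s" unfolding h_def rho_a_def E_def by (simp add: algebra_simps)
          finally show "norm (f s) \<le> (1 + al s) * h s" .
        qed (use yc uc \<Phi>c in auto)
        then have "c t' \<le> (1 + al t') * (\<Phi> t' - \<epsilon>)" unfolding c_def c0_def \<Phi>0 by simp
        also have "\<dots> < (1 + al t') * \<Phi> t'"
          using al_nonneg[of t'] \<epsilon> by (simp add: algebra_simps add_pos_nonneg)
        finally show ?thesis .
      qed
    qed
    then show ?thesis unfolding \<Phi>_def .
  qed
  have "c t \<le> (1 + al t) * (c0 * Q t + K * (E t - Q t))"
  proof (rule field_le_epsilon)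
    fix e :: real assume e: "e > 0"
    have pos: "(1 + al t) * Q t > 0" using Q0[of t] al_nonneg[of t] by (simp add: add_pos_nonneg)
    have "c t \<le> (1 + al t) * ((c0 + e / ((1 + al t) * Q t)) * Q t + K * (E t - Q t))"
      using e pos by (intro main) simp
    also have "\<dots> = (1 + al t) * (c0 * Q t + K * (E t - Q t)) + e"
      using pos by (simp add: field_simps)
    finally show "c t \<le> (1 + al t) * (c0 * Q t + K * (E t - Q t)) + e" .
  qed
  also have "\<dots> = rho_a H t * (th_a H t * c0 + K * (1 - th_a H t))"
  proof -
    have eq: "exp (4 * H * be t) * exp (- (2 * H * be t)) = Q t" unfolding Q_def by (simp add: exp_add[symmetric])
    have "rho_a H t * (th_a H t * c0 + K * (1 - th_a H t))
       = (1 + al t) * (c0 * (exp (4 * H * be t) * exp (- (2 * H * be t))) + K * (exp (4 * H * be t) - exp (4 * H * be t) * exp (- (2 * H * be t))))"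
      unfolding rho_a_def th_a_def by (simp add: algebra_simps)
    then show ?thesis unfolding eq E_def by simp
  qed
  finally show ?thesis unfolding c_def c0_def y_def u_def by simp
qed


definition rho_b :: "real \<Rightarrow> real \<Rightarrow> real" where
  "rho_b H t = exp ((1 + 2 * H) * t)"
definition th_b :: "real \<Rightarrow> real \<Rightarrow> real" where
  "th_b H t = exp (- (H * t))"

lemma pair_b:
  fixes X1 X2 V1 V2 F1 F2 :: "real \<Rightarrow> 'v" and D :: "real \<Rightarrow> real" and k :: 'v
  assumes H0: "H \<ge> 0" and K0: "K \<ge> 0"
    and dX1: "\<And>s. 0 \<le> s \<Longrightarrow> (X1 has_vector_derivative V1 s) (at s within {0..})"
    and dV1: "\<And>s. 0 \<le> s \<Longrightarrow> (V1 has_vector_derivative (F1 s + \<omega> *\<^sub>R J (V1 s))) (at s within {0..})"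
    and dX2: "\<And>s. 0 \<le> s \<Longrightarrow> (X2 has_vector_derivative V2 s) (at s within {0..})"
    and dV2: "\<And>s. 0 \<le> s \<Longrightarrow> (V2 has_vector_derivative (F2 s + \<omega> *\<^sub>R J (V2 s))) (at s within {0..})"
    and fb: "\<And>s. 0 \<le> s \<Longrightarrow> norm (F1 s - F2 s) \<le> H * norm (X1 s - X2 s - k) + H * D s"
    and DK: "\<And>s. 0 \<le> s \<Longrightarrow> s \<le> T \<Longrightarrow> D s \<le> K * rho_b H s"
    and t: "0 \<le> t" "t \<le> T"
  shows "norm (X1 t - X2 t - k) + norm (V1 t - V2 t)
     \<le> rho_b H t * (th_b H t * (norm (X1 0 - X2 0 - k) + norm (V1 0 - V2 0)) + K * (1 - th_b H t))"
proof -
  define y where "y s = X1 s - X2 s - k" for s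
  define u where "u s = V1 s - V2 s" for s
  define f where "f s = F1 s - F2 s" for s
  define c where "c s = norm (y s) + norm (u s)" for s
  define c0 where "c0 = c 0"
  define E where "E s = exp ((1 + 2 * H) * s)" for s
  define Q where "Q s = exp ((1 + H) * s)" for s
  have yd: "(y has_vector_derivative u s) (at s within {0..})" if "0 \<le> s" for s
    unfolding y_def u_def
    apply (rule has_vector_derivative_eq_rhs)
     apply (rule derivative_eq_intros dX1[OF that] dX2[OF that] refl)+
    by simp
  have ud: "(u has_vector_derivative (f s + \<omega> *\<^sub>R J (u s))) (at s within {0..})" if "0 \<le> s" for s
    unfolding u_def f_def
    apply (rule has_vector_derivative_eq_rhs)
     apply (rule has_vector_derivative_diff[OF dV1[OF that] dV2[OF that]])
    by (simp add: J.diff scaleR_diff_right algebra_simps)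
  have yc: "continuous_on {0..T'} y" for T' using yd by (rule cont_from_deriv)
  have uc: "continuous_on {0..T'} u" for T' using ud by (rule cont_from_deriv)
  have Q0: "Q s > 0" for s unfolding Q_def by simp
  have main: "c t \<le> (c0 + \<epsilon>) * Q t + K * (E t - Q t)" if \<epsilon>: "\<epsilon> > 0" for \<epsilon>
  proof -
    define \<Phi> where "\<Phi> s = (c0 + \<epsilon>) * Q s + K * (E s - Q s)" for s
    define \<Phi>' where "\<Phi>' s = (1 + H) * \<Phi> s + H * K * E s" for s
    have \<Phi>0: "\<Phi> 0 = c0 + \<epsilon>" unfolding \<Phi>_def Q_def E_def by simp
    have \<Phi>d: "(\<Phi> has_real_derivative \<Phi>' s) (at s)" for s
      unfolding \<Phi>_def \<Phi>'_def Q_def E_def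
      apply (rule DERIV_cong)
       apply (rule derivative_eq_intros refl)+
      by (simp add: algebra_simps)
    have \<Phi>c: "continuous_on S \<Phi>" for S
      unfolding \<Phi>_def Q_def E_def by (intro continuous_intros)
    have "c t \<le> \<Phi> t"
    proof (rule first_cross[of T c \<Phi>])
      show "continuous_on {0..T} c" unfolding c_def by (intro continuous_intros yc uc)
      show "continuous_on {0..T} \<Phi>" by (rule \<Phi>c)
      show "0 \<le> t" "t \<le> T" using t by auto
    next
      fix t' assume t': "0 \<le> t'" "t' \<le> T" and hyp: "\<forall>s. 0 \<le> s \<and> s < t' \<longrightarrow> c s \<le> \<Phi> s"
      show "c t' < \<Phi> t'"
      proof (cases "t' = 0")
        case True
        then show ?thesis using \<Phi>0 \<epsilon> by (simp add: c0_def)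
      next
        case False
        then have t'0: "0 < t'" using t' by simp
        have "norm (y t') + norm (u t') \<le> norm (y 0) + norm (u 0) + \<Phi> t' - \<Phi> 0"
        proof (rule KS_b[OF t'0, where f = f and \<Gamma>' = \<Phi>'])
          fix s assume s: "0 < s" "s < t'"
          show "(y has_vector_derivative u s) (at s)" using yd[of s] s by (intro within_to_at) auto
          show "(u has_vector_derivative f s + \<omega> *\<^sub>R J (u s)) (at s)" using ud[of s] s by (intro within_to_at) auto
          show "(\<Phi> has_real_derivative \<Phi>' s) (at s)" by (rule \<Phi>d)
          have cs: "norm (y s) + norm (u s) \<le> \<Phi> s" using hyp s unfolding c_def by auto
          have "norm (f s) \<le> H * norm (y s) + H * D s" unfolding f_def y_def using fb[of s] s by simp
          also have "\<dots> \<le> H * norm (y s) + H * (K * E s)"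
            using DK[of s] s t' H0 unfolding rho_b_def E_def by (intro add_left_mono mult_left_mono) auto
          finally have A0: "norm (f s) \<le> H * norm (y s) + H * (K * E s)" .
          then have A: "norm (f s) + norm (u s) \<le> norm (u s) + H * norm (y s) + H * K * E s" by (simp add: mult.assoc)
          have nn: "0 \<le> H * norm (u s)" "0 \<le> norm (y s)" using H0 by auto
          have "norm (f s) + norm (u s) \<le> (1 + H) * (norm (y s) + norm (u s)) + H * K * E s"
            using A nn unfolding distrib_left distrib_right mult_1_left by linarith
          also have "\<dots> \<le> (1 + H) * \<Phi> s + H * K * E s"
            using cs H0 by (intro add_right_mono mult_left_mono) auto
          finally show "norm (f s) + norm (u s) \<le> \<Phi>' s" unfolding \<Phi>'_def .
        qed (use yc uc \<Phi>c in auto)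
        then have "c t' \<le> \<Phi> t' - \<epsilon>" unfolding c_def c0_def \<Phi>0 by simp
        then show ?thesis using \<epsilon> by simp
      qed
    qed
    then show ?thesis unfolding \<Phi>_def .
  qed
  have "c t \<le> c0 * Q t + K * (E t - Q t)"
  proof (rule field_le_epsilon)
    fix e :: real assume e: "e > 0"
    have "c t \<le> (c0 + e / Q t) * Q t + K * (E t - Q t)"
      using e Q0[of t] by (intro main) simp
    also have "\<dots> = c0 * Q t + K * (E t - Q t) + e"
      using Q0[of t] by (simp add: field_simps)
    finally show "c t \<le> c0 * Q t + K * (E t - Q t) + e" .
  qed
  also have "\<dots> = rho_b H t * (th_b H t * c0 + K * (1 - th_b H t))"
  proof -
    have eq: "exp ((1 + 2 * H) * t) * exp (- (H * t)) = Q t" unfolding Q_def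
      by (simp add: exp_add[symmetric] algebra_simps)
    have "rho_b H t * (th_b H t * c0 + K * (1 - th_b H t))
       = c0 * (exp ((1 + 2 * H) * t) * exp (- (H * t))) + K * (exp ((1 + 2 * H) * t) - exp ((1 + 2 * H) * t) * exp (- (H * t)))"
      unfolding rho_b_def th_b_def by (simp add: algebra_simps)
    then show ?thesis unfolding eq E_def by simp
  qed
  finally show ?thesis unfolding c_def c0_def y_def u_def by simp
qed


lemma rho_a_ge1: "H \<ge> 0 \<Longrightarrow> t \<ge> 0 \<Longrightarrow> rho_a H t \<ge> 1"
proof -
  assume a: "H \<ge> 0" "t \<ge> 0"
  have "1 \<le> exp (4 * H * be t)" using a be_nonneg[of t] by simp
  then show ?thesis unfolding rho_a_def using al_nonneg[of t] mult_mono[of 1 "1 + al t" 1 "exp (4 * H * be t)"] by simp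
qed

lemma rho_b_ge1: "H \<ge> 0 \<Longrightarrow> t \<ge> 0 \<Longrightarrow> rho_b H t \<ge> 1"
  unfolding rho_b_def by simp

theorem main_generic:
  fixes K :: "'v \<Rightarrow> real" and G :: "'v \<Rightarrow> 'v" and \<mu>1 \<mu>2 :: "real \<Rightarrow> ('v \<times> 'v) measure"
  assumes per: "periodic K" and gd: "\<forall>x. GDERIV K x :> G x"
    and lip: "\<forall>x y. norm (G x - G y) \<le> H * norm (x - y)"
    and sol1: "vb_solution G (\<lambda>v. \<omega> *\<^sub>R J v) \<mu>1" and sol2: "vb_solution G (\<lambda>v. \<omega> *\<^sub>R J v) \<mu>2"
    and t: "t \<ge> 0"
  shows "W1 (\<mu>1 t) (\<mu>2 t) \<le> ennreal (min (rho_a H t) (rho_b H t)) * W1 (\<mu>1 0) (\<mu>2 0)"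
proof -
  have H0: "H \<ge> 0" by (rule H_nonneg[OF lip])
  from sol1 obtain Z1 :: "real \<Rightarrow> 'v \<times> 'v \<Rightarrow> 'v \<times> 'v" where
    s10: "sets (\<mu>1 0) = sets borel" and Z10': "\<forall>z. Z1 0 z = z"
    and Z1m': "\<forall>s\<ge>0. Z1 s \<in> borel_measurable borel"
    and Z1d': "\<forall>z. \<forall>s\<ge>0. ((\<lambda>s. Z1 s z) has_vector_derivative
              (snd (Z1 s z), force G (\<mu>1 s) (fst (Z1 s z)) + \<omega> *\<^sub>R J (snd (Z1 s z)))) (at s within {0..})"
    and \<mu>1s': "\<forall>s\<ge>0. \<mu>1 s = distr (\<mu>1 0) borel (\<lambda>z. (tor (fst (Z1 s z)), snd (Z1 s z)))"
    unfolding vb_solution_def by blast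
  have Z10: "\<And>z. Z1 0 z = z" using Z10' by blast
  have Z1m: "\<And>s. s \<ge> 0 \<Longrightarrow> Z1 s \<in> borel_measurable borel" using Z1m' by blast
  have Z1d: "\<And>z s. s \<ge> 0 \<Longrightarrow> ((\<lambda>s. Z1 s z) has_vector_derivative
              (snd (Z1 s z), force G (\<mu>1 s) (fst (Z1 s z)) + \<omega> *\<^sub>R J (snd (Z1 s z)))) (at s within {0..})"
    using Z1d' by blast
  have \<mu>1s: "\<And>s. s \<ge> 0 \<Longrightarrow> \<mu>1 s = distr (\<mu>1 0) borel (\<lambda>z. (tor (fst (Z1 s z)), snd (Z1 s z)))"
    using \<mu>1s' by blast
  from sol2 obtain Z2 :: "real \<Rightarrow> 'v \<times> 'v \<Rightarrow> 'v \<times> 'v" where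
    s20: "sets (\<mu>2 0) = sets borel" and Z20': "\<forall>z. Z2 0 z = z"
    and Z2m': "\<forall>s\<ge>0. Z2 s \<in> borel_measurable borel"
    and Z2d': "\<forall>z. \<forall>s\<ge>0. ((\<lambda>s. Z2 s z) has_vector_derivative
              (snd (Z2 s z), force G (\<mu>2 s) (fst (Z2 s z)) + \<omega> *\<^sub>R J (snd (Z2 s z)))) (at s within {0..})"
    and \<mu>2s': "\<forall>s\<ge>0. \<mu>2 s = distr (\<mu>2 0) borel (\<lambda>z. (tor (fst (Z2 s z)), snd (Z2 s z)))"
    unfolding vb_solution_def by blast
  have Z20: "\<And>z. Z2 0 z = z" using Z20' by blast
  have Z2m: "\<And>s. s \<ge> 0 \<Longrightarrow> Z2 s \<in> borel_measurable borel" using Z2m' by blast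
  have Z2d: "\<And>z s. s \<ge> 0 \<Longrightarrow> ((\<lambda>s. Z2 s z) has_vector_derivative
              (snd (Z2 s z), force G (\<mu>2 s) (fst (Z2 s z)) + \<omega> *\<^sub>R J (snd (Z2 s z)))) (at s within {0..})"
    using Z2d' by blast
  have \<mu>2s: "\<And>s. s \<ge> 0 \<Longrightarrow> \<mu>2 s = distr (\<mu>2 0) borel (\<lambda>z. (tor (fst (Z2 s z)), snd (Z2 s z)))"
    using \<mu>2s' by blast
  define cmin where "cmin = min (rho_a H t) (rho_b H t)"
  have cpos: "cmin > 0" unfolding cmin_def using rho_a_ge1[OF H0 t] rho_b_ge1[OF H0 t] by simp
  have per_pi: "W1 (\<mu>1 t) (\<mu>2 t) \<le> ennreal cmin * (\<integral>\<^sup>+ p. ennreal (cost (fst p) (snd p)) \<partial>\<pi>)"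
    if \<pi>: "\<pi> \<in> couplings (\<mu>1 0) (\<mu>2 0)" for \<pi>
  proof -
    have P: "prob_space \<pi>" and s\<pi>: "sets \<pi> = sets borel"
      and mar1: "distr \<pi> borel fst = \<mu>1 0" and mar2: "distr \<pi> borel snd = \<mu>2 0"
      using \<pi> unfolding couplings_def by auto
    have fstm: "fst \<in> measurable \<pi> borel"
      by (subst measurable_cong_sets[OF s\<pi> refl]) (rule borel_measurable_continuous_onI[OF continuous_on_fst[OF continuous_on_id]])
    have sndm: "snd \<in> measurable \<pi> borel"
      by (subst measurable_cong_sets[OF s\<pi> refl]) (rule borel_measurable_continuous_onI[OF continuous_on_snd[OF continuous_on_id]])
    define X1 where "X1 s (q :: ('v \<times> 'v) \<times> ('v \<times> 'v)) = fst (Z1 s (fst q))" for s q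
    define V1 where "V1 s (q :: ('v \<times> 'v) \<times> ('v \<times> 'v)) = snd (Z1 s (fst q))" for s q
    define X2 where "X2 s (q :: ('v \<times> 'v) \<times> ('v \<times> 'v)) = fst (Z2 s (snd q))" for s q
    define V2 where "V2 s (q :: ('v \<times> 'v) \<times> ('v \<times> 'v)) = snd (Z2 s (snd q))" for s q
    define c where "c s q = tdist (X1 s q) (X2 s q) + norm (V1 s q - V2 s q)" for s q
    define Dm where "Dm s = (\<integral>q. tdist (X1 s q) (X2 s q) \<partial>\<pi>)" for s
    have meas: "X1 s \<in> borel_measurable \<pi>" "V1 s \<in> borel_measurable \<pi>"
      "X2 s \<in> borel_measurable \<pi>" "V2 s \<in> borel_measurable \<pi>" if "s \<ge> 0" for s
    proof -
      note Z1m[OF that, measurable] Z2m[OF that, measurable] fstm[measurable] sndm[measurable]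
      show "X1 s \<in> borel_measurable \<pi>" "V1 s \<in> borel_measurable \<pi>"
        "X2 s \<in> borel_measurable \<pi>" "V2 s \<in> borel_measurable \<pi>"
        unfolding X1_def V1_def X2_def V2_def by measurable
    qed
    have F1: "force G (\<mu>1 s) x = (\<integral>q. G (x - X1 s q) \<partial>\<pi>)" if "s \<ge> 0" for s x
      unfolding X1_def by (rule force_rep[where \<mu>=\<mu>1 and Z=Z1 and s=s, OF per gd lip s10 Z1m[OF that] \<mu>1s[OF that] fstm mar1])
    have F2: "force G (\<mu>2 s) x = (\<integral>q. G (x - X2 s q) \<partial>\<pi>)" if "s \<ge> 0" for s x
      unfolding X2_def by (rule force_rep[where \<mu>=\<mu>2 and Z=Z2 and s=s, OF per gd lip s20 Z2m[OF that] \<mu>2s[OF that] sndm mar2])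
    have fb: "norm (force G (\<mu>1 s) (X1 s q) - force G (\<mu>2 s) (X2 s q))
        \<le> H * norm (X1 s q - X2 s q - k) + H * Dm s" if "s \<ge> 0" "k \<in> lattice" for s q k
      unfolding F1[OF that(1)] F2[OF that(1)] Dm_def
      by (rule force_diff[OF per gd lip P meas(1)[OF that(1)] meas(3)[OF that(1)] that(2)])
    have dX1: "((\<lambda>s. X1 s q) has_vector_derivative V1 s q) (at s within {0..})" if "s \<ge> 0" for s q
      unfolding X1_def V1_def using bounded_linear.has_vector_derivative[OF bounded_linear_fst Z1d[OF that, of "fst q"]] by simp
    have dV1: "((\<lambda>s. V1 s q) has_vector_derivative (force G (\<mu>1 s) (X1 s q) + \<omega> *\<^sub>R J (V1 s q))) (at s within {0..})" if "s \<ge> 0" for s q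
      unfolding X1_def V1_def using bounded_linear.has_vector_derivative[OF bounded_linear_snd Z1d[OF that, of "fst q"]] by simp
    have dX2: "((\<lambda>s. X2 s q) has_vector_derivative V2 s q) (at s within {0..})" if "s \<ge> 0" for s q
      unfolding X2_def V2_def using bounded_linear.has_vector_derivative[OF bounded_linear_fst Z2d[OF that, of "snd q"]] by simp
    have dV2: "((\<lambda>s. V2 s q) has_vector_derivative (force G (\<mu>2 s) (X2 s q) + \<omega> *\<^sub>R J (V2 s q))) (at s within {0..})" if "s \<ge> 0" for s q
      unfolding X2_def V2_def using bounded_linear.has_vector_derivative[OF bounded_linear_snd Z2d[OF that, of "snd q"]] by simp
    have c0: "c 0 q = cost (fst q) (snd q)" for q
      unfolding c_def X1_def X2_def V1_def V2_def cost_def by (simp add: Z10 Z20)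
    have cm: "(\<lambda>q. c s q) \<in> borel_measurable \<pi>" if "s \<ge> 0" for s
    proof -
      note meas[OF that, measurable]
      show ?thesis unfolding c_def by measurable
    qed
    have cnn: "c s q \<ge> 0" for s q unfolding c_def by (simp add: tdist_nonneg)
    have iT: "integrable \<pi> (\<lambda>q. tdist (X1 s q) (X2 s q))" if "s \<ge> 0" for s
    proof -
      interpret prob_space \<pi> by (rule P)
      show ?thesis using meas[OF that]
        by (intro integrable_const_bound[where B = "real DIM('v)"]) (auto simp: tdist_nonneg tdist_bound)
    qed
    have Dle: "ennreal (Dm s) \<le> (\<integral>\<^sup>+q. ennreal (c s q) \<partial>\<pi>)" if "s \<ge> 0" for s
    proof -
      have "ennreal (Dm s) = (\<integral>\<^sup>+q. ennreal (tdist (X1 s q) (X2 s q)) \<partial>\<pi>)"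
        unfolding Dm_def using iT[OF that] by (subst nn_integral_eq_integral) (auto simp: tdist_nonneg)
      also have "\<dots> \<le> (\<integral>\<^sup>+q. ennreal (c s q) \<partial>\<pi>)"
        by (intro nn_integral_mono ennreal_leI) (simp add: c_def)
      finally show ?thesis .
    qed
    have Dmax: "Dm s \<le> real DIM('v)" if "s \<ge> 0" for s
      unfolding Dm_def using P iT[OF that]
      by (intro prob_space.integral_le_const) (auto simp: tdist_bound)
    have pw_gen: "c t' q \<le> \<rho> t' * (\<theta> t' * c 0 q + K' * (1 - \<theta> t'))"
      if pair: "\<And>k. k \<in> lattice \<Longrightarrow> norm (X1 t' q - X2 t' q - k) + norm (V1 t' q - V2 t' q)
               \<le> \<rho> t' * (\<theta> t' * (norm (X1 0 q - X2 0 q - k) + norm (V1 0 q - V2 0 q)) + K' * (1 - \<theta> t'))"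
        and pos: "\<rho> t' * \<theta> t' > 0"
      for t' q K' and \<rho> \<theta> :: "real \<Rightarrow> real"
    proof -
      have "c t' q \<le> (\<rho> t' * \<theta> t') * (tdist (X1 0 q) (X2 0 q) + norm (V1 0 q - V2 0 q)) + \<rho> t' * K' * (1 - \<theta> t')"
      proof (rule tdist_inf[OF pos])
        fix k :: 'v assume k: "k \<in> lattice"
        have "c t' q \<le> norm (X1 t' q - X2 t' q - k) + norm (V1 t' q - V2 t' q)"
          unfolding c_def using tdist_le[OF k] by simp
        also have "\<dots> \<le> \<rho> t' * (\<theta> t' * (norm (X1 0 q - X2 0 q - k) + norm (V1 0 q - V2 0 q)) + K' * (1 - \<theta> t'))"
          by (rule pair[OF k])
        finally show "c t' q \<le> (\<rho> t' * \<theta> t') * (norm (X1 0 q - X2 0 q - k) + norm (V1 0 q - V2 0 q)) + \<rho> t' * K' * (1 - \<theta> t')"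
          by (simp add: algebra_simps)
      qed
      then show ?thesis unfolding c_def[of 0] by (simp add: algebra_simps)
    qed
    have ga: "(\<integral>\<^sup>+q. ennreal (c t q) \<partial>\<pi>) \<le> ennreal (rho_a H t) * (\<integral>\<^sup>+q. ennreal (c 0 q) \<partial>\<pi>)"
    proof (rule gronwall_measure[OF P cm cnn Dle Dmax _ rho_a_ge1[OF H0]])
      show "0 \<le> real DIM('v)" by simp
      show "\<And>t. 0 \<le> t \<Longrightarrow> 0 < th_a H t" unfolding th_a_def by simp
      show "\<And>t. 0 \<le> t \<Longrightarrow> th_a H t \<le> 1" unfolding th_a_def using H0 be_nonneg by simp
      show "\<And>s t. 0 \<le> s \<Longrightarrow> s \<le> t \<Longrightarrow> th_a H t \<le> th_a H s" unfolding th_a_def using H0 be_mono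
        by (simp add: mult_left_mono)
      show "0 \<le> t" by (rule t)
      fix T K' t' q assume K': "0 \<le> K'" and DK: "\<And>s. 0 \<le> s \<Longrightarrow> s \<le> T \<Longrightarrow> Dm s \<le> K' * rho_a H s"
        and t': "0 \<le> t'" "t' \<le> T"
      show "c t' q \<le> rho_a H t' * (th_a H t' * c 0 q + K' * (1 - th_a H t'))"
      proof (rule pw_gen)
        fix k :: 'v assume k: "k \<in> lattice"
        show "norm (X1 t' q - X2 t' q - k) + norm (V1 t' q - V2 t' q)
          \<le> rho_a H t' * (th_a H t' * (norm (X1 0 q - X2 0 q - k) + norm (V1 0 q - V2 0 q)) + K' * (1 - th_a H t'))"
          by (rule pair_a[OF H0 K' dX1 dV1 dX2 dV2 fb[OF _ k] DK t'])
      next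
        show "0 < rho_a H t' * th_a H t'" using rho_a_ge1[OF H0 t'(1)] unfolding th_a_def by simp
      qed
    qed
    have gb: "(\<integral>\<^sup>+q. ennreal (c t q) \<partial>\<pi>) \<le> ennreal (rho_b H t) * (\<integral>\<^sup>+q. ennreal (c 0 q) \<partial>\<pi>)"
    proof (rule gronwall_measure[OF P cm cnn Dle Dmax _ rho_b_ge1[OF H0]])
      show "0 \<le> real DIM('v)" by simp
      show "\<And>t. 0 \<le> t \<Longrightarrow> 0 < th_b H t" unfolding th_b_def by simp
      show "\<And>t. 0 \<le> t \<Longrightarrow> th_b H t \<le> 1" unfolding th_b_def using H0 by simp
      show "\<And>s t. 0 \<le> s \<Longrightarrow> s \<le> t \<Longrightarrow> th_b H t \<le> th_b H s" unfolding th_b_def using H0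
        by (simp add: mult_left_mono)
      show "0 \<le> t" by (rule t)
      fix T K' t' q assume K': "0 \<le> K'" and DK: "\<And>s. 0 \<le> s \<Longrightarrow> s \<le> T \<Longrightarrow> Dm s \<le> K' * rho_b H s"
        and t': "0 \<le> t'" "t' \<le> T"
      show "c t' q \<le> rho_b H t' * (th_b H t' * c 0 q + K' * (1 - th_b H t'))"
      proof (rule pw_gen)
        fix k :: 'v assume k: "k \<in> lattice"
        show "norm (X1 t' q - X2 t' q - k) + norm (V1 t' q - V2 t' q)
          \<le> rho_b H t' * (th_b H t' * (norm (X1 0 q - X2 0 q - k) + norm (V1 0 q - V2 0 q)) + K' * (1 - th_b H t'))"
          by (rule pair_b[OF H0 K' dX1 dV1 dX2 dV2 fb[OF _ k] DK t'])
      next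
        show "0 < rho_b H t' * th_b H t'" unfolding rho_b_def th_b_def by simp
      qed
    qed
    have gmin: "(\<integral>\<^sup>+q. ennreal (c t q) \<partial>\<pi>) \<le> ennreal cmin * (\<integral>\<^sup>+q. ennreal (c 0 q) \<partial>\<pi>)"
      unfolding cmin_def using ga gb by (cases "rho_a H t \<le> rho_b H t") (auto simp: min_def)
    define \<Phi> where "\<Phi> q = ((tor (X1 t q), V1 t q), (tor (X2 t q), V2 t q))" for q
    have \<Phi>m: "\<Phi> \<in> measurable \<pi> borel"
    proof -
      note meas[OF t, measurable]
      show ?thesis unfolding \<Phi>_def by measurable
    qed
    have coup: "distr \<pi> borel \<Phi> \<in> couplings (\<mu>1 t) (\<mu>2 t)"
    proof -
      have m1: "(\<lambda>z. (tor (fst (Z1 t z)), snd (Z1 t z))) \<in> measurable borel borel"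
        using Z1m[OF t] by measurable
      have m2: "(\<lambda>z. (tor (fst (Z2 t z)), snd (Z2 t z))) \<in> measurable borel borel"
        using Z2m[OF t] by measurable
      have fstb: "fst \<in> measurable (borel :: (('v \<times> 'v) \<times> ('v \<times> 'v)) measure) borel"
        by (rule borel_measurable_continuous_onI[OF continuous_on_fst[OF continuous_on_id]])
      have sndb: "snd \<in> measurable (borel :: (('v \<times> 'v) \<times> ('v \<times> 'v)) measure) borel"
        by (rule borel_measurable_continuous_onI[OF continuous_on_snd[OF continuous_on_id]])
      have "distr (distr \<pi> borel \<Phi>) borel fst = distr \<pi> borel (fst \<circ> \<Phi>)"
        by (rule distr_distr[OF fstb \<Phi>m])
      also have "fst \<circ> \<Phi> = (\<lambda>z. (tor (fst (Z1 t z)), snd (Z1 t z))) \<circ> fst"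
        unfolding \<Phi>_def X1_def V1_def by auto
      also have "distr \<pi> borel \<dots> = distr (distr \<pi> borel fst) borel (\<lambda>z. (tor (fst (Z1 t z)), snd (Z1 t z)))"
        by (rule distr_distr[symmetric, OF m1 fstm])
      also have "\<dots> = \<mu>1 t" unfolding mar1 \<mu>1s[OF t] ..
      finally have d1: "distr (distr \<pi> borel \<Phi>) borel fst = \<mu>1 t" .
      have "distr (distr \<pi> borel \<Phi>) borel snd = distr \<pi> borel (snd \<circ> \<Phi>)"
        by (rule distr_distr[OF sndb \<Phi>m])
      also have "snd \<circ> \<Phi> = (\<lambda>z. (tor (fst (Z2 t z)), snd (Z2 t z))) \<circ> snd"
        unfolding \<Phi>_def X2_def V2_def by auto
      also have "distr \<pi> borel \<dots> = distr (distr \<pi> borel snd) borel (\<lambda>z. (tor (fst (Z2 t z)), snd (Z2 t z)))"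
        by (rule distr_distr[symmetric, OF m2 sndm])
      also have "\<dots> = \<mu>2 t" unfolding mar2 \<mu>2s[OF t] ..
      finally have d2: "distr (distr \<pi> borel \<Phi>) borel snd = \<mu>2 t" .
      show ?thesis unfolding couplings_def
        using prob_space.prob_space_distr[OF P \<Phi>m] d1 d2 by simp
    qed
    have "W1 (\<mu>1 t) (\<mu>2 t) \<le> (\<integral>\<^sup>+ p. ennreal (cost (fst p) (snd p)) \<partial>distr \<pi> borel \<Phi>)"
      unfolding W1_def by (rule INF_lower[OF coup])
    also have "\<dots> = (\<integral>\<^sup>+ q. ennreal (cost (fst (\<Phi> q)) (snd (\<Phi> q))) \<partial>\<pi>)"
    proof (rule nn_integral_distr[OF \<Phi>m])
      have f1: "(\<lambda>p::('v \<times> 'v) \<times> ('v \<times> 'v). fst (fst p)) \<in> borel_measurable borel"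
        by (intro borel_measurable_continuous_onI continuous_intros)
      have f2: "(\<lambda>p::('v \<times> 'v) \<times> ('v \<times> 'v). fst (snd p)) \<in> borel_measurable borel"
        by (intro borel_measurable_continuous_onI continuous_intros)
      have f3: "(\<lambda>p::('v \<times> 'v) \<times> ('v \<times> 'v). norm (snd (fst p) - snd (snd p))) \<in> borel_measurable borel"
        by (intro borel_measurable_continuous_onI continuous_intros)
      have "(\<lambda>p::('v \<times> 'v) \<times> ('v \<times> 'v). cost (fst p) (snd p)) \<in> borel_measurable borel"
        unfolding cost_def by (rule borel_measurable_add[OF tdist_meas2[OF f1 f2] f3])
      then have "(\<lambda>p::('v \<times> 'v) \<times> ('v \<times> 'v). ennreal (cost (fst p) (snd p))) \<in> borel_measurable borel"
        using measurable_compose[OF _ measurable_ennreal] by blast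
      then show "(\<lambda>p. ennreal (cost (fst p) (snd p))) \<in> borel_measurable (distr \<pi> borel \<Phi>)"
        by (subst measurable_cong_sets[OF sets_distr refl])
    qed
    also have "\<dots> = (\<integral>\<^sup>+ q. ennreal (c t q) \<partial>\<pi>)"
      unfolding \<Phi>_def cost_def c_def by (simp add: tdist_tor)
    also have "\<dots> \<le> ennreal cmin * (\<integral>\<^sup>+q. ennreal (c 0 q) \<partial>\<pi>)" by (rule gmin)
    also have "\<dots> = ennreal cmin * (\<integral>\<^sup>+ p. ennreal (cost (fst p) (snd p)) \<partial>\<pi>)" by (simp add: c0)
    finally show ?thesis .
  qed
  show ?thesis
    unfolding cmin_def[symmetric] W1_def[of "\<mu>1 0"]
    by (rule ennreal_INF_bound[OF cpos per_pi])
qed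

end


section \<open>Instances d = 2 and d = 3\<close>

definition J2 :: "real \<times> real \<Rightarrow> real \<times> real" where "J2 v = (snd v, - fst v)"
definition P2 :: "real \<times> real \<Rightarrow> real \<times> real" where "P2 v = 0"
definition J3 :: "real \<times> real \<times> real \<Rightarrow> real \<times> real \<times> real" where "J3 v = (fst (snd v), - fst v, 0)"
definition P3 :: "real \<times> real \<times> real \<Rightarrow> real \<times> real \<times> real" where "P3 v = (0, 0, snd (snd v))"

lemma blJ2: "bounded_linear J2"
proof -
  have "J2 = (\<lambda>v. (snd v, - fst v))" unfolding J2_def ..
  moreover have "bounded_linear (\<lambda>v::real \<times> real. (snd v, - fst v))"
    by (intro bounded_linear_Pair bounded_linear_snd bounded_linear_minus bounded_linear_fst)
  ultimately show ?thesis by simp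
qed

lemma blP2: "bounded_linear P2"
proof -
  have e: "P2 = (\<lambda>v. 0)" unfolding P2_def ..
  show ?thesis by (subst e) (rule bounded_linear_zero)
qed

lemma blJ3: "bounded_linear J3"
proof -
  have "J3 = (\<lambda>v. (fst (snd v), - fst v, 0))" unfolding J3_def ..
  moreover have "bounded_linear (\<lambda>v::real \<times> real \<times> real. (fst (snd v), - fst v, 0::real))"
    by (intro bounded_linear_Pair bounded_linear_compose[OF bounded_linear_fst bounded_linear_snd]
        bounded_linear_minus bounded_linear_fst bounded_linear_zero)
  ultimately show ?thesis by simp
qed

lemma blP3: "bounded_linear P3"
proof -
  have "P3 = (\<lambda>v. (0, 0, snd (snd v)))" unfolding P3_def ..
  moreover have "bounded_linear (\<lambda>v::real \<times> real \<times> real. (0::real, 0::real, snd (snd v)))"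
    by (intro bounded_linear_Pair bounded_linear_compose[OF bounded_linear_snd bounded_linear_snd]
        bounded_linear_zero)
  ultimately show ?thesis by simp
qed

lemma magJP2: "\<omega> > 0 \<Longrightarrow> magJP \<omega> J2 P2 0"
  unfolding magJP_def using blJ2 blP2 by (auto simp: J2_def P2_def inner_Pair algebra_simps zero_prod_def)

lemma magJP3: "\<omega> > 0 \<Longrightarrow> magJP \<omega> J3 P3 1"
  unfolding magJP_def using blJ3 blP3 by (auto simp: J3_def P3_def inner_Pair algebra_simps zero_prod_def)

lemma mag2_eq: "mag2 \<omega> = (\<lambda>v. \<omega> *\<^sub>R J2 v)"
  unfolding mag2_def J2_def by auto

lemma mag3_eq: "mag3 \<omega> = (\<lambda>v. \<omega> *\<^sub>R J3 v)"
  unfolding mag3_def J3_def by auto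

theorem theorem3p1:
  fixes \<omega> H :: real
  assumes "\<omega> > 0"
  shows
   "(\<forall>(K :: real \<times> real \<Rightarrow> real) G (\<mu>1 :: real \<Rightarrow> ((real \<times> real) \<times> (real \<times> real)) measure) \<mu>2 t.
       periodic K \<and> (\<forall>x. GDERIV K x :> G x) \<and>
       (\<forall>x y. norm (G x - G y) \<le> H * norm (x - y)) \<and>
       vb_solution G (mag2 \<omega>) \<mu>1 \<and> vb_solution G (mag2 \<omega>) \<mu>2 \<and> t \<ge> 0 \<longrightarrow>
       W1 (\<mu>1 t) (\<mu>2 t) \<le>
         ennreal (min ((sqrt (2 * (1 - cos (\<omega> * t)) / \<omega>\<^sup>2) + 1) *
                         exp (4 * H * (2 * (t - sin (\<omega> * t) / \<omega>) / \<omega>\<^sup>2 + t)))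
                      (exp ((1 + 2 * H) * t)))
         * W1 (\<mu>1 0) (\<mu>2 0))
  \<and>
    (\<forall>(K :: real \<times> real \<times> real \<Rightarrow> real) G
         (\<mu>1 :: real \<Rightarrow> ((real \<times> real \<times> real) \<times> (real \<times> real \<times> real)) measure) \<mu>2 t.
       periodic K \<and> (\<forall>x. GDERIV K x :> G x) \<and>
       (\<forall>x y. norm (G x - G y) \<le> H * norm (x - y)) \<and>
       vb_solution G (mag3 \<omega>) \<mu>1 \<and> vb_solution G (mag3 \<omega>) \<mu>2 \<and> t \<ge> 0 \<longrightarrow>
       W1 (\<mu>1 t) (\<mu>2 t) \<le>
         ennreal (min ((sqrt (2 * (1 - cos (\<omega> * t)) / \<omega>\<^sup>2 + t\<^sup>2) + 1) *
                         exp (4 * H * (2 * (t - sin (\<omega> * t) / \<omega>) / \<omega>\<^sup>2 + t ^ 3 / 3 + t)))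
                      (exp ((1 + 2 * H) * t)))
         * W1 (\<mu>1 0) (\<mu>2 0))"
proof (intro conjI allI impI)
  interpret m2: magJP \<omega> J2 P2 0 by (rule magJP2[OF assms])
  fix K :: "real \<times> real \<Rightarrow> real" and G and \<mu>1 \<mu>2 :: "real \<Rightarrow> ((real \<times> real) \<times> (real \<times> real)) measure" and t :: real
  assume h: "periodic K \<and> (\<forall>x. GDERIV K x :> G x) \<and>
       (\<forall>x y. norm (G x - G y) \<le> H * norm (x - y)) \<and>
       vb_solution G (mag2 \<omega>) \<mu>1 \<and> vb_solution G (mag2 \<omega>) \<mu>2 \<and> t \<ge> 0"
  have r: "m2.rho_a H t = (sqrt (2 * (1 - cos (\<omega> * t)) / \<omega>\<^sup>2) + 1) *
                         exp (4 * H * (2 * (t - sin (\<omega> * t) / \<omega>) / \<omega>\<^sup>2 + t))"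
    unfolding m2.rho_a_def m2.al_def m2.be_def by simp
  have r2: "m2.rho_b H t = exp ((1 + 2 * H) * t)" unfolding m2.rho_b_def ..
  show "W1 (\<mu>1 t) (\<mu>2 t) \<le>
         ennreal (min ((sqrt (2 * (1 - cos (\<omega> * t)) / \<omega>\<^sup>2) + 1) *
                         exp (4 * H * (2 * (t - sin (\<omega> * t) / \<omega>) / \<omega>\<^sup>2 + t)))
                      (exp ((1 + 2 * H) * t)))
         * W1 (\<mu>1 0) (\<mu>2 0)"
    using m2.main_generic[of K G H \<mu>1 \<mu>2 t] h unfolding r r2 mag2_eq by blast
next
  interpret m3: magJP \<omega> J3 P3 1 by (rule magJP3[OF assms])
  fix K :: "real \<times> real \<times> real \<Rightarrow> real" and G
    and \<mu>1 \<mu>2 :: "real \<Rightarrow> ((real \<times> real \<times> real) \<times> (real \<times> real \<times> real)) measure" and t :: real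
  assume h: "periodic K \<and> (\<forall>x. GDERIV K x :> G x) \<and>
       (\<forall>x y. norm (G x - G y) \<le> H * norm (x - y)) \<and>
       vb_solution G (mag3 \<omega>) \<mu>1 \<and> vb_solution G (mag3 \<omega>) \<mu>2 \<and> t \<ge> 0"
  have r: "m3.rho_a H t = (sqrt (2 * (1 - cos (\<omega> * t)) / \<omega>\<^sup>2 + t\<^sup>2) + 1) *
                         exp (4 * H * (2 * (t - sin (\<omega> * t) / \<omega>) / \<omega>\<^sup>2 + t ^ 3 / 3 + t))"
    unfolding m3.rho_a_def m3.al_def m3.be_def by simp
  have r2: "m3.rho_b H t = exp ((1 + 2 * H) * t)" unfolding m3.rho_b_def ..
  show "W1 (\<mu>1 t) (\<mu>2 t) \<le>
         ennreal (min ((sqrt (2 * (1 - cos (\<omega> * t)) / \<omega>\<^sup>2 + t\<^sup>2) + 1) *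
                         exp (4 * H * (2 * (t - sin (\<omega> * t) / \<omega>) / \<omega>\<^sup>2 + t ^ 3 / 3 + t)))
                      (exp ((1 + 2 * H) * t)))
         * W1 (\<mu>1 0) (\<mu>2 0)"
    using m3.main_generic[of K G H \<mu>1 \<mu>2 t] h unfolding r r2 mag3_eq by blast
qed

end
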